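(* Let $(V,\{\nu_n\})$ be an $L^\infty$-MOS and $(W,\{M_n(W)_+\},e)$ an abstract operator system, regarded as an $L^\infty$-MOS with order gauges $\omega_n(B)=\inf\{t>0: B\le tI_n\otimes e\}$. Suppose $\phi:V\to W$ is completely gauge-contractive. Then the unital extension $\tilde\phi:V_1\to W$, $\tilde\phi(x,\lambda)=\phi(x)+\lambda e$, is completely positive, where $V_1$ carries the cones $M_n(V_1)_+=\{(A,X):u_n(-A,-X)=0\}$.
   Context: An $L^\infty$-MOS is a complex $*$-vector space $V$ ($M_n(V)$ with $(x_{ij})^*=(x_{ji}^* )$, self-adjoint part $M_n(V)_{sa}$) with proper gauges $\nu_n:M_n(V)_{sa}\to[0,\infty)$ (subadditive, positively homogeneous, $\nu_n(A)=\nu_n(-A)=0\Rightarrow A=0$) such that $\nu_k(X^*AX)\le\|X\|^2\nu_n(A)$ for scalar $X\in M_{n,k}$ and $\nu_{n+k}(A\oplus B)=\max\{\nu_n(A),\nu_k(B)\}$. An abstract operator system is a $*$-vector space with proper cones $M_n(W)_+\subseteq M_n(W)_{sa}$ closed under direct sums and scalar conjugations $B\mapsto XBX^*$, and $e$ such that each $(M_n(W)_{sa},M_n(W)_+,I_n\otimes e)$ is an Archimedean order unit space. A linear map $\phi:(V,\{\nu_n\})\to(W,\{\omega_n\})$ is completely gauge-contractive if $\phi(x^* )=\phi(x)^*$ and $\omega_n(\phi^{(n)}(A))\le\nu_n(A)$ for all $n$ and $A\in M_n(V)_{sa}$. Unitization: $V_1=V\oplus\mathbb{C}$, $M_n(V_1)=M_n(V)\oplus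 M_n$, $(A,X)^*=(A^*,X^* )$, $X_t=tI_n-X$, $Y\gg0$ means positive invertible, $u_n(A,X)=\inf\{t>0:X_t\gg0,\ \nu_n(X_t^{-1/2}AX_t^{-1/2})\le1\}$. Completely positive means each $\tilde\phi^{(n)}$ maps $M_n(V_1)_+$ into $M_n(W)_+$. *)

theory Defs
  imports "HOL-Analysis.Analysis"
begin

(* Matrices over a type are represented as functions nat => nat => 'a;
   an n x n matrix is one vanishing outside the index range {0..<n}^2.
   A complex vector space is a type 'v :: ab_group_add with a scalar
   multiplication smul :: complex => 'v => 'v (locale vector_space),
   and an involution st. *)

definition star_space :: "(complex \<Rightarrow> 'v::ab_group_add \<Rightarrow> 'v) \<Rightarrow> ('v \<Rightarrow> 'v) \<Rightarrow> bool" where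
  "star_space smul st \<longleftrightarrow> vector_space smul \<and> (\<forall>x. st (st x) = x)
     \<and> (\<forall>x y. st (x + y) = st x + st y) \<and> (\<forall>c x. st (smul c x) = smul (cnj c) (st x))"

definition mat_on :: "nat \<Rightarrow> (nat \<Rightarrow> nat \<Rightarrow> 'a::zero) \<Rightarrow> bool" where
  "mat_on n A \<longleftrightarrow> (\<forall>i j. \<not> (i < n \<and> j < n) \<longrightarrow> A i j = 0)"

definition msa :: "('a::zero \<Rightarrow> 'a) \<Rightarrow> nat \<Rightarrow> (nat \<Rightarrow> nat \<Rightarrow> 'a) set" where
  "msa st n = {A. mat_on n A \<and> (\<forall>i<n. \<forall>j<n. A i j = st (A j i))}"

definition mzero :: "nat \<Rightarrow> nat \<Rightarrow> 'a::zero" where "mzero = (\<lambda>i j. 0)"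
definition madd :: "(nat \<Rightarrow> nat \<Rightarrow> 'a::plus) \<Rightarrow> (nat \<Rightarrow> nat \<Rightarrow> 'a) \<Rightarrow> nat \<Rightarrow> nat \<Rightarrow> 'a" where
  "madd A B = (\<lambda>i j. A i j + B i j)"
definition mneg :: "(nat \<Rightarrow> nat \<Rightarrow> 'a::uminus) \<Rightarrow> nat \<Rightarrow> nat \<Rightarrow> 'a" where
  "mneg A = (\<lambda>i j. - A i j)"
definition mscale :: "(complex \<Rightarrow> 'v \<Rightarrow> 'v) \<Rightarrow> complex \<Rightarrow> (nat \<Rightarrow> nat \<Rightarrow> 'v) \<Rightarrow> nat \<Rightarrow> nat \<Rightarrow> 'v" where
  "mscale smul c A = (\<lambda>i j. smul c (A i j))"

definition idt :: "nat \<Rightarrow> 'a::zero \<Rightarrow> nat \<Rightarrow> nat \<Rightarrow> 'a" where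
  "idt n e = (\<lambda>i j. if i < n \<and> j < n \<and> i = j then e else 0)"

text \<open>scalar conjugation X^* A X for A in M_n(V), X in M_{n,k}; result in M_k(V)\<close>
definition sconj :: "(complex \<Rightarrow> 'v::ab_group_add \<Rightarrow> 'v) \<Rightarrow> nat \<Rightarrow> nat \<Rightarrow> (nat \<Rightarrow> nat \<Rightarrow> complex)
    \<Rightarrow> (nat \<Rightarrow> nat \<Rightarrow> 'v) \<Rightarrow> nat \<Rightarrow> nat \<Rightarrow> 'v" where
  "sconj smul n k X A = (\<lambda>i j. if i < k \<and> j < k
      then (\<Sum>p<n. \<Sum>q<n. smul (cnj (X p i) * X q j) (A p q)) else 0)"

definition dsum :: "nat \<Rightarrow> nat \<Rightarrow> (nat \<Rightarrow> nat \<Rightarrow> 'a::zero) \<Rightarrow> (nat \<Rightarrow> nat \<Rightarrow> 'a) \<Rightarrow> nat \<Rightarrow> nat \<Rightarrow> 'a" where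
  "dsum n k A B = (\<lambda>i j. if i < n \<and> j < n then A i j
      else if n \<le> i \<and> i < n + k \<and> n \<le> j \<and> j < n + k then B (i - n) (j - n) else 0)"

definition opnorm :: "nat \<Rightarrow> nat \<Rightarrow> (nat \<Rightarrow> nat \<Rightarrow> complex) \<Rightarrow> real" where
  "opnorm n k X = Sup {sqrt (\<Sum>i<n. (cmod (\<Sum>j<k. X i j * v j))\<^sup>2) | v. (\<Sum>j<k. (cmod (v j))\<^sup>2) \<le> 1}"

definition proper_gauge :: "(complex \<Rightarrow> 'v::ab_group_add \<Rightarrow> 'v) \<Rightarrow> ('v \<Rightarrow> 'v) \<Rightarrow> nat
    \<Rightarrow> ((nat \<Rightarrow> nat \<Rightarrow> 'v) \<Rightarrow> real) \<Rightarrow> bool" where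
  "proper_gauge smul st n g \<longleftrightarrow>
     (\<forall>A\<in>msa st n. 0 \<le> g A)
   \<and> (\<forall>A\<in>msa st n. \<forall>B\<in>msa st n. g (madd A B) \<le> g A + g B)
   \<and> (\<forall>A\<in>msa st n. \<forall>t::real. 0 \<le> t \<longrightarrow> g (mscale smul (complex_of_real t) A) = t * g A)
   \<and> (\<forall>A\<in>msa st n. g A = 0 \<and> g (mneg A) = 0 \<longrightarrow> A = mzero)"

definition Linf_MOS :: "(complex \<Rightarrow> 'v::ab_group_add \<Rightarrow> 'v) \<Rightarrow> ('v \<Rightarrow> 'v)
    \<Rightarrow> (nat \<Rightarrow> (nat \<Rightarrow> nat \<Rightarrow> 'v) \<Rightarrow> real) \<Rightarrow> bool" where
  "Linf_MOS smul st \<nu> \<longleftrightarrow> star_space smul st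
   \<and> (\<forall>n>0. proper_gauge smul st n (\<nu> n))
   \<and> (\<forall>n>0. \<forall>k>0. \<forall>X. \<forall>A\<in>msa st n.
        \<nu> k (sconj smul n k X A) \<le> (opnorm n k X)\<^sup>2 * \<nu> n A)
   \<and> (\<forall>n>0. \<forall>k>0. \<forall>A\<in>msa st n. \<forall>B\<in>msa st k.
        \<nu> (n + k) (dsum n k A B) = max (\<nu> n A) (\<nu> k B))"

definition operator_system :: "(complex \<Rightarrow> 'w::ab_group_add \<Rightarrow> 'w) \<Rightarrow> ('w \<Rightarrow> 'w)
    \<Rightarrow> (nat \<Rightarrow> (nat \<Rightarrow> nat \<Rightarrow> 'w) set) \<Rightarrow> 'w \<Rightarrow> bool" where
  "operator_system smul st P e \<longleftrightarrow> star_space smul st \<and> st e = e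
   \<and> (\<forall>n>0. P n \<subseteq> msa st n)
   \<and> (\<forall>n>0. \<forall>A\<in>P n. \<forall>B\<in>P n. madd A B \<in> P n)
   \<and> (\<forall>n>0. \<forall>A\<in>P n. \<forall>t::real. 0 \<le> t \<longrightarrow> mscale smul (complex_of_real t) A \<in> P n)
   \<and> (\<forall>n>0. \<forall>A\<in>P n. mneg A \<in> P n \<longrightarrow> A = mzero)
   \<and> (\<forall>n>0. \<forall>k>0. \<forall>A\<in>P n. \<forall>B\<in>P k. dsum n k A B \<in> P (n + k))
   \<and> (\<forall>n>0. \<forall>k>0. \<forall>X. \<forall>B\<in>P n. sconj smul n k X B \<in> P k)
   \<and> (\<forall>n>0. \<forall>A\<in>msa st n. \<exists>t::real. 0 < t \<and>
        madd (idt n (smul (complex_of_real t) e)) (mneg A) \<in> P n)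
   \<and> (\<forall>n>0. \<forall>A\<in>msa st n. (\<forall>\<epsilon>::real. 0 < \<epsilon> \<longrightarrow>
        madd (idt n (smul (complex_of_real \<epsilon>) e)) A \<in> P n) \<longrightarrow> A \<in> P n)"

definition order_gauge :: "(complex \<Rightarrow> 'w::ab_group_add \<Rightarrow> 'w) \<Rightarrow> (nat \<Rightarrow> (nat \<Rightarrow> nat \<Rightarrow> 'w) set)
    \<Rightarrow> 'w \<Rightarrow> nat \<Rightarrow> (nat \<Rightarrow> nat \<Rightarrow> 'w) \<Rightarrow> real" where
  "order_gauge smul P e n B = Inf {t::real. 0 < t \<and>
       madd (idt n (smul (complex_of_real t) e)) (mneg B) \<in> P n}"

definition mapn :: "nat \<Rightarrow> ('v \<Rightarrow> 'w::zero) \<Rightarrow> (nat \<Rightarrow> nat \<Rightarrow> 'v) \<Rightarrow> nat \<Rightarrow> nat \<Rightarrow> 'w" where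
  "mapn n f A = (\<lambda>i j. if i < n \<and> j < n then f (A i j) else 0)"

definition completely_gauge_contractive :: "(complex \<Rightarrow> 'v::ab_group_add \<Rightarrow> 'v) \<Rightarrow> ('v \<Rightarrow> 'v)
    \<Rightarrow> (nat \<Rightarrow> (nat \<Rightarrow> nat \<Rightarrow> 'v) \<Rightarrow> real)
    \<Rightarrow> (complex \<Rightarrow> 'w::ab_group_add \<Rightarrow> 'w) \<Rightarrow> ('w \<Rightarrow> 'w)
    \<Rightarrow> (nat \<Rightarrow> (nat \<Rightarrow> nat \<Rightarrow> 'w) \<Rightarrow> real) \<Rightarrow> ('v \<Rightarrow> 'w) \<Rightarrow> bool" where
  "completely_gauge_contractive smulV stV \<nu> smulW stW \<omega> \<phi> \<longleftrightarrow>
     Vector_Spaces.linear smulV smulW \<phi>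
   \<and> (\<forall>x. \<phi> (stV x) = stW (\<phi> x))
   \<and> (\<forall>n>0. \<forall>A\<in>msa stV n. \<omega> n (mapn n \<phi> A) \<le> \<nu> n A)"

definition cmmul :: "nat \<Rightarrow> (nat \<Rightarrow> nat \<Rightarrow> complex) \<Rightarrow> (nat \<Rightarrow> nat \<Rightarrow> complex) \<Rightarrow> nat \<Rightarrow> nat \<Rightarrow> complex" where
  "cmmul n X Y = (\<lambda>i j. if i < n \<and> j < n then (\<Sum>p<n. X i p * Y p j) else 0)"

definition cid :: "nat \<Rightarrow> nat \<Rightarrow> nat \<Rightarrow> complex" where
  "cid n = idt n 1"

definition pos_inv :: "nat \<Rightarrow> (nat \<Rightarrow> nat \<Rightarrow> complex) \<Rightarrow> bool" where
  "pos_inv n Y \<longleftrightarrow> Y \<in> msa cnj n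
     \<and> (\<forall>v. 0 \<le> Re (\<Sum>i<n. \<Sum>j<n. cnj (v i) * Y i j * v j))
     \<and> (\<exists>Z. mat_on n Z \<and> cmmul n Y Z = cid n \<and> cmmul n Z Y = cid n)"

definition inv_sqrt :: "nat \<Rightarrow> (nat \<Rightarrow> nat \<Rightarrow> complex) \<Rightarrow> nat \<Rightarrow> nat \<Rightarrow> complex" where
  "inv_sqrt n Y = (THE S. mat_on n S \<and> pos_inv n S \<and> cmmul n (cmmul n S S) Y = cid n)"

definition shiftm :: "nat \<Rightarrow> real \<Rightarrow> (nat \<Rightarrow> nat \<Rightarrow> complex) \<Rightarrow> nat \<Rightarrow> nat \<Rightarrow> complex" where
  "shiftm n t X = (\<lambda>i j. if i < n \<and> j < n then (if i = j then complex_of_real t else 0) - X i j else 0)"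

definition unorm :: "(complex \<Rightarrow> 'v::ab_group_add \<Rightarrow> 'v) \<Rightarrow> (nat \<Rightarrow> (nat \<Rightarrow> nat \<Rightarrow> 'v) \<Rightarrow> real)
    \<Rightarrow> nat \<Rightarrow> (nat \<Rightarrow> nat \<Rightarrow> 'v) \<Rightarrow> (nat \<Rightarrow> nat \<Rightarrow> complex) \<Rightarrow> real" where
  "unorm smul \<nu> n A X = Inf {t::real. 0 < t \<and> pos_inv n (shiftm n t X)
      \<and> \<nu> n (sconj smul n n (inv_sqrt n (shiftm n t X)) A) \<le> 1}"

definition unit_pos :: "(complex \<Rightarrow> 'v::ab_group_add \<Rightarrow> 'v) \<Rightarrow> ('v \<Rightarrow> 'v)
    \<Rightarrow> (nat \<Rightarrow> (nat \<Rightarrow> nat \<Rightarrow> 'v) \<Rightarrow> real) \<Rightarrow> nat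
    \<Rightarrow> ((nat \<Rightarrow> nat \<Rightarrow> 'v) \<times> (nat \<Rightarrow> nat \<Rightarrow> complex)) set" where
  "unit_pos smul st \<nu> n = {(A, X). A \<in> msa st n \<and> X \<in> msa cnj n
      \<and> unorm smul \<nu> n (mneg A) (mneg X) = 0}"

definition unital_ext_n :: "('w \<Rightarrow> 'w \<Rightarrow> 'w) \<Rightarrow> (complex \<Rightarrow> 'w::ab_group_add \<Rightarrow> 'w) \<Rightarrow> ('v \<Rightarrow> 'w) \<Rightarrow> 'w \<Rightarrow> nat
    \<Rightarrow> (nat \<Rightarrow> nat \<Rightarrow> 'v) \<times> (nat \<Rightarrow> nat \<Rightarrow> complex) \<Rightarrow> nat \<Rightarrow> nat \<Rightarrow> 'w" where
  "unital_ext_n pl smul \<phi> e n AX = (\<lambda>i j. if i < n \<and> j < n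
      then pl (\<phi> (fst AX i j)) (smul (snd AX i j) e) else 0)"

definition completely_positive_unital_ext :: "(complex \<Rightarrow> 'v::ab_group_add \<Rightarrow> 'v) \<Rightarrow> ('v \<Rightarrow> 'v)
    \<Rightarrow> (nat \<Rightarrow> (nat \<Rightarrow> nat \<Rightarrow> 'v) \<Rightarrow> real)
    \<Rightarrow> (complex \<Rightarrow> 'w::ab_group_add \<Rightarrow> 'w) \<Rightarrow> (nat \<Rightarrow> (nat \<Rightarrow> nat \<Rightarrow> 'w) set) \<Rightarrow> 'w
    \<Rightarrow> ('v \<Rightarrow> 'w) \<Rightarrow> bool" where
  "completely_positive_unital_ext smulV stV \<nu> smulW P e \<phi> \<longleftrightarrow>
     (\<forall>n>0. \<forall>AX\<in>unit_pos smulV stV \<nu> n. unital_ext_n (+) smulW \<phi> e n AX \<in> P n)"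

end

theory Submission
  imports Defs
begin


definition madj :: "(nat \<Rightarrow> nat \<Rightarrow> complex) \<Rightarrow> nat \<Rightarrow> nat \<Rightarrow> complex" where
  "madj R = (\<lambda>i j. cnj (R j i))"
definition mv :: "nat \<Rightarrow> (nat \<Rightarrow> nat \<Rightarrow> complex) \<Rightarrow> (nat \<Rightarrow> complex) \<Rightarrow> nat \<Rightarrow> complex" where
  "mv n A v = (\<lambda>i. \<Sum>j<n. A i j * v j)"
definition ip :: "nat \<Rightarrow> (nat \<Rightarrow> complex) \<Rightarrow> (nat \<Rightarrow> complex) \<Rightarrow> complex" where
  "ip n u w = (\<Sum>i<n. cnj (u i) * w i)"
definition nsq :: "nat \<Rightarrow> (nat \<Rightarrow> complex) \<Rightarrow> real" where
  "nsq n v = (\<Sum>i<n. (cmod (v i))\<^sup>2)"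
definition herm :: "nat \<Rightarrow> (nat \<Rightarrow> nat \<Rightarrow> complex) \<Rightarrow> bool" where
  "herm n H \<longleftrightarrow> (\<forall>i<n. \<forall>j<n. H i j = cnj (H j i))"
definition qf :: "nat \<Rightarrow> (nat \<Rightarrow> nat \<Rightarrow> complex) \<Rightarrow> (nat \<Rightarrow> complex) \<Rightarrow> real" where
  "qf n H v = Re (ip n v (mv n H v))"
definition fro :: "nat \<Rightarrow> (nat \<Rightarrow> nat \<Rightarrow> complex) \<Rightarrow> real" where
  "fro n A = (\<Sum>i<n. \<Sum>j<n. (cmod (A i j))\<^sup>2)"

lemma cmmul_in: "i < n \<Longrightarrow> j < n \<Longrightarrow> cmmul n A B i j = (\<Sum>p<n. A i p * B p j)"
  by (simp add: cmmul_def)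
lemma cmmul_out: "\<not> (i < n \<and> j < n) \<Longrightarrow> cmmul n A B i j = 0"
  unfolding cmmul_def by auto
lemma mat_on_cmmul[simp]: "mat_on n (cmmul n A B)"
  unfolding mat_on_def by (intro allI impI) (rule cmmul_out)

lemma cmmul_assoc: "cmmul n (cmmul n A B) C = cmmul n A (cmmul n B C)"
proof (intro ext)
  fix i j
  show "cmmul n (cmmul n A B) C i j = cmmul n A (cmmul n B C) i j"
  proof (cases "i < n \<and> j < n")
    case True
    have "cmmul n (cmmul n A B) C i j = (\<Sum>p<n. (\<Sum>q<n. A i q * B q p) * C p j)"
      using True by (simp add: cmmul_in)
    also have "\<dots> = (\<Sum>p<n. \<Sum>q<n. A i q * B q p * C p j)" by (simp add: sum_distrib_right)
    also have "\<dots> = (\<Sum>q<n. \<Sum>p<n. A i q * B q p * C p j)" by (rule sum.swap)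
    also have "\<dots> = (\<Sum>q<n. A i q * (\<Sum>p<n. B q p * C p j))" by (simp add: sum_distrib_left mult.assoc)
    also have "\<dots> = cmmul n A (cmmul n B C) i j" using True by (simp add: cmmul_in)
    finally show ?thesis .
  qed (simp add: cmmul_out)
qed

lemma cid_in: "cid n i j = (if i < n \<and> j < n \<and> i = j then 1 else 0)"
  by (simp add: cid_def idt_def)

lemma cmmul_cid_left: "mat_on n A \<Longrightarrow> cmmul n (cid n) A = A"
proof (intro ext)
  fix i j assume A: "mat_on n A"
  show "cmmul n (cid n) A i j = A i j"
  proof (cases "i < n \<and> j < n")
    case True
    have "cmmul n (cid n) A i j = (\<Sum>p<n. (if i = p then A p j else 0))"
      unfolding cmmul_in[OF True[THEN conjunct1] True[THEN conjunct2]]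
      by (rule sum.cong) (use True in \<open>auto simp: cid_in\<close>)
    also have "\<dots> = A i j" using True by (simp add: sum.delta)
    finally show ?thesis .
  qed (use A in \<open>auto simp: cmmul_out mat_on_def\<close>)
qed

lemma cmmul_cid_right: "mat_on n A \<Longrightarrow> cmmul n A (cid n) = A"
proof (intro ext)
  fix i j assume A: "mat_on n A"
  show "cmmul n A (cid n) i j = A i j"
  proof (cases "i < n \<and> j < n")
    case True
    have "cmmul n A (cid n) i j = (\<Sum>p<n. (if p = j then A i p else 0))"
      unfolding cmmul_in[OF True[THEN conjunct1] True[THEN conjunct2]]
      by (rule sum.cong) (use True in \<open>auto simp: cid_in\<close>)
    also have "\<dots> = A i j" using True by (simp add: sum.delta')
    finally show ?thesis .
  qed (use A in \<open>auto simp: cmmul_out mat_on_def\<close>)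
qed

lemma mat_on_cid[simp]: "mat_on n (cid n)" by (simp add: mat_on_def cid_in)



lemma mv_cmmul: "i < n \<Longrightarrow> mv n (cmmul n A B) v i = mv n A (mv n B v) i"
proof -
  assume i: "i < n"
  have "mv n (cmmul n A B) v i = (\<Sum>j<n. (\<Sum>p<n. A i p * B p j) * v j)"
    unfolding mv_def using i by (intro sum.cong) (auto simp: cmmul_in)
  also have "\<dots> = (\<Sum>j<n. \<Sum>p<n. A i p * B p j * v j)" by (simp add: sum_distrib_right)
  also have "\<dots> = (\<Sum>p<n. \<Sum>j<n. A i p * B p j * v j)" by (rule sum.swap)
  also have "\<dots> = mv n A (mv n B v) i" by (simp add: mv_def sum_distrib_left mult.assoc)
  finally show ?thesis .
qed

lemma mv_cong: "(\<And>j. j < n \<Longrightarrow> u j = w j) \<Longrightarrow> mv n A u = mv n A w"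
  unfolding mv_def by (intro ext sum.cong) auto
lemma ip_cong: "(\<And>j. j < n \<Longrightarrow> u j = u' j) \<Longrightarrow> (\<And>j. j < n \<Longrightarrow> w j = w' j) \<Longrightarrow> ip n u w = ip n u' w'"
  unfolding ip_def by (intro sum.cong) auto
lemma nsq_cong: "(\<And>j. j < n \<Longrightarrow> u j = w j) \<Longrightarrow> nsq n u = nsq n w"
  unfolding nsq_def by (intro sum.cong) auto

lemma nsq_nonneg: "0 \<le> nsq n v" unfolding nsq_def by (intro sum_nonneg) auto

lemma cnj_mult_self: "cnj z * z = complex_of_real ((cmod z)\<^sup>2)"
  by (metis complex_norm_square mult.commute)

lemma ip_self: "ip n v v = complex_of_real (nsq n v)"
  unfolding ip_def nsq_def of_real_sum by (rule sum.cong) (simp_all only: cnj_mult_self)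

lemma ip_cnj: "cnj (ip n u w) = ip n w u"
  unfolding ip_def by (simp add: mult.commute)

lemma ip_adj: "ip n u (mv n A w) = ip n (mv n (madj A) u) w"
proof -
  have "ip n u (mv n A w) = (\<Sum>i<n. \<Sum>j<n. cnj (u i) * A i j * w j)"
    by (simp add: ip_def mv_def sum_distrib_left mult.assoc)
  also have "\<dots> = (\<Sum>j<n. \<Sum>i<n. cnj (u i) * A i j * w j)" by (rule sum.swap)
  also have "\<dots> = (\<Sum>j<n. (\<Sum>i<n. A i j * cnj (u i)) * w j)"
    by (simp add: sum_distrib_right sum_distrib_left mult_ac)
  also have "\<dots> = ip n (mv n (madj A) u) w"
    by (simp add: ip_def mv_def madj_def cnj_sum)
  finally show ?thesis .
qed

lemma hermD: "herm n A \<Longrightarrow> i < n \<Longrightarrow> j < n \<Longrightarrow> A i j = cnj (A j i)"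
  unfolding herm_def by blast

lemma herm_mv_adj: "herm n A \<Longrightarrow> i < n \<Longrightarrow> mv n (madj A) u i = mv n A u i"
  unfolding mv_def madj_def by (intro sum.cong refl) (metis hermD lessThan_iff)

lemma herm_ip: "herm n A \<Longrightarrow> ip n u (mv n A w) = ip n (mv n A u) w"
  unfolding ip_adj by (rule ip_cong) (simp_all add: herm_mv_adj)

lemma cmod_ip_le: "cmod (ip n u w) \<le> sqrt (nsq n u) * sqrt (nsq n w)"
proof -
  have "cmod (ip n u w) \<le> (\<Sum>i<n. cmod (u i) * cmod (w i))"
    unfolding ip_def by (rule order_trans[OF norm_sum]) (simp add: norm_mult)
  also have "\<dots> = (\<Sum>i<n. \<bar>cmod (u i)\<bar> * \<bar>cmod (w i)\<bar>)" by simp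
  also have "\<dots> \<le> L2_set (\<lambda>i. cmod (u i)) {..<n} * L2_set (\<lambda>i. cmod (w i)) {..<n}"
    by (rule L2_set_mult_ineq)
  also have "\<dots> = sqrt (nsq n u) * sqrt (nsq n w)" by (simp add: L2_set_def nsq_def)
  finally show ?thesis .
qed

lemma cmod_ip_sq: "(cmod (ip n u w))\<^sup>2 \<le> nsq n u * nsq n w"
proof -
  have "(cmod (ip n u w))\<^sup>2 \<le> (sqrt (nsq n u) * sqrt (nsq n w))\<^sup>2"
    by (rule power_mono[OF cmod_ip_le]) simp
  also have "\<dots> = nsq n u * nsq n w" by (simp add: power_mult_distrib nsq_nonneg)
  finally show ?thesis .
qed

lemma mv_lin: "mv n H (\<lambda>i. u i + c * w i) = (\<lambda>i. mv n H u i + c * mv n H w i)"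
  unfolding mv_def by (simp add: algebra_simps sum.distrib sum_distrib_left)

lemma ip_lin_left: "ip n (\<lambda>i. u i + c * w i) x = ip n u x + cnj c * ip n w x"
  unfolding ip_def by (simp add: algebra_simps sum.distrib sum_distrib_left)
lemma ip_lin_right: "ip n x (\<lambda>i. u i + c * w i) = ip n x u + c * ip n x w"
  unfolding ip_def by (simp add: algebra_simps sum.distrib sum_distrib_left)

lemma qf_expand:
  assumes "herm n H"
  shows "qf n H (\<lambda>i. u i + c * w i) = qf n H u + 2 * Re (c * ip n u (mv n H w)) + (cmod c)\<^sup>2 * qf n H w"
proof -
  have e: "ip n w (mv n H u) = cnj (ip n u (mv n H w))"
    using herm_ip[OF assms, of w u] ip_cnj[of n u "mv n H w"] by simp
  have "ip n (\<lambda>i. u i + c * w i) (mv n H (\<lambda>i. u i + c * w i))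
     = ip n u (mv n H u) + c * ip n u (mv n H w) + cnj c * ip n w (mv n H u) + cnj c * c * ip n w (mv n H w)"
    by (simp add: mv_lin ip_lin_left ip_lin_right algebra_simps)
  hence "qf n H (\<lambda>i. u i + c * w i) = Re (ip n u (mv n H u) + c * ip n u (mv n H w) + cnj c * cnj (ip n u (mv n H w)) + cnj c * c * ip n w (mv n H w))"
    by (simp add: qf_def e)
  also have "\<dots> = qf n H u + 2 * Re (c * ip n u (mv n H w)) + (cmod c)\<^sup>2 * qf n H w"
    by (simp add: qf_def complex_norm_square[symmetric] mult.commute[of "cnj c"])
  finally show ?thesis .
qed

lemma cs_psd:
  assumes h: "herm n H" and psd: "\<And>v. 0 \<le> qf n H v"
  shows "(cmod (ip n u (mv n H w)))\<^sup>2 \<le> qf n H u * qf n H w"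
proof -
  define z where "z = ip n u (mv n H w)"
  have key: "0 \<le> qf n H u - 2 * s * (cmod z)\<^sup>2 + s\<^sup>2 * (cmod z)\<^sup>2 * qf n H w" for s :: real
  proof -
    have "0 \<le> qf n H (\<lambda>i. u i + (- (complex_of_real s * cnj z)) * w i)" by (rule psd)
    also have "\<dots> = qf n H u + 2 * Re (- (complex_of_real s * cnj z) * z) + (cmod (complex_of_real s * cnj z))\<^sup>2 * qf n H w"
      using qf_expand[OF h, of u "- (complex_of_real s * cnj z)" w] unfolding z_def by simp
    also have "\<dots> = qf n H u - 2 * s * (cmod z)\<^sup>2 + s\<^sup>2 * (cmod z)\<^sup>2 * qf n H w"
    proof -
      have "Re (- (complex_of_real s * cnj z) * z) = - s * (cmod z)\<^sup>2"
        by (simp add: cmod_power2 algebra_simps power2_eq_square[of "Re z"] power2_eq_square[of "Im z"])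
      moreover have "(cmod (complex_of_real s * cnj z))\<^sup>2 = s\<^sup>2 * (cmod z)\<^sup>2"
        by (simp add: norm_mult power_mult_distrib)
      ultimately show ?thesis by simp
    qed
    finally show ?thesis .
  qed
  have qu: "0 \<le> qf n H u" and qw: "0 \<le> qf n H w" by (rule psd)+
  show ?thesis
  proof (cases "qf n H w = 0")
    case True
    show ?thesis
    proof (rule ccontr)
      assume "\<not> ?thesis"
      hence pz: "0 < (cmod z)\<^sup>2" using True by (simp add: z_def)
      have "0 \<le> qf n H u - 2 * ((qf n H u + 1) / (cmod z)\<^sup>2) * (cmod z)\<^sup>2"
        using key[of "(qf n H u + 1) / (cmod z)\<^sup>2"] True by simp
      also have "\<dots> = - qf n H u - 2" using pz by (simp add: field_simps)
      finally show False using qu by simp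
    qed
  next
    case False
    hence pw: "0 < qf n H w" using qw by simp
    have "0 \<le> qf n H u - 2 * (1 / qf n H w) * (cmod z)\<^sup>2 + (1 / qf n H w)\<^sup>2 * (cmod z)\<^sup>2 * qf n H w"
      by (rule key)
    also have "\<dots> = (qf n H u * qf n H w - (cmod z)\<^sup>2) / qf n H w"
      using pw by (simp add: field_simps power2_eq_square)
    finally have "0 \<le> qf n H u * qf n H w - (cmod z)\<^sup>2"
      using pw by (simp add: zero_le_divide_iff)
    thus ?thesis by (simp add: z_def)
  qed
qed



lemma fro_nonneg: "0 \<le> fro n A" unfolding fro_def by (intro sum_nonneg) auto

lemma nsq_mv_le: "nsq n (mv n A v) \<le> fro n A * nsq n v"
proof -
  have "(cmod (mv n A v i))\<^sup>2 \<le> (\<Sum>j<n. (cmod (A i j))\<^sup>2) * nsq n v" for i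
  proof -
    have "mv n A v i = ip n (\<lambda>j. cnj (A i j)) v" by (simp add: mv_def ip_def)
    hence "(cmod (mv n A v i))\<^sup>2 \<le> nsq n (\<lambda>j. cnj (A i j)) * nsq n v" using cmod_ip_sq by metis
    thus ?thesis by (simp add: nsq_def)
  qed
  hence "nsq n (mv n A v) \<le> (\<Sum>i<n. (\<Sum>j<n. (cmod (A i j))\<^sup>2) * nsq n v)"
    unfolding nsq_def[of n "mv n A v"] by (intro sum_mono) auto
  also have "\<dots> = fro n A * nsq n v" by (simp add: fro_def sum_distrib_right)
  finally show ?thesis .
qed

lemma cmod_ip_mv_le: "cmod (ip n v (mv n A v)) \<le> sqrt (fro n A) * nsq n v"
proof -
  have "cmod (ip n v (mv n A v)) \<le> sqrt (nsq n v) * sqrt (nsq n (mv n A v))" by (rule cmod_ip_le)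
  also have "\<dots> \<le> sqrt (nsq n v) * sqrt (fro n A * nsq n v)"
    by (intro mult_left_mono real_sqrt_le_mono nsq_mv_le) (simp add: nsq_nonneg)
  also have "\<dots> = sqrt (fro n A) * nsq n v"
    using nsq_nonneg[of n v] by (simp add: real_sqrt_mult)
  finally show ?thesis .
qed

lemma qf_upper: "qf n A v \<le> sqrt (fro n A) * nsq n v"
  unfolding qf_def using cmod_ip_mv_le[of n v A] abs_Re_le_cmod[of "ip n v (mv n A v)"] by linarith

lemma qf_lower: "- (sqrt (fro n A) * nsq n v) \<le> qf n A v"
  unfolding qf_def using cmod_ip_mv_le[of n v A] abs_Re_le_cmod[of "ip n v (mv n A v)"] by linarith

lemma bnd_from_psd:
  assumes h: "herm n H" and psd: "\<And>v. 0 \<le> qf n H v" and up: "\<And>v. qf n H v \<le> q * nsq n v"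
  shows "nsq n (mv n H v) \<le> q\<^sup>2 * nsq n v"
proof -
  let ?w = "mv n H v"
  have q0: "0 \<le> q" if "nsq n ?w > 0"
  proof (rule ccontr)
    assume "\<not> 0 \<le> q"
    hence "q * nsq n ?w < 0" using that by (simp add: mult_neg_pos)
    thus False using psd[of ?w] up[of ?w] by linarith
  qed
  have "(cmod (ip n ?w (mv n H v)))\<^sup>2 \<le> qf n H ?w * qf n H v" by (rule cs_psd[OF h psd])
  moreover have "cmod (ip n ?w (mv n H v)) = nsq n ?w" by (simp add: ip_self nsq_nonneg)
  ultimately have 1: "(nsq n ?w)\<^sup>2 \<le> qf n H ?w * qf n H v" by simp
  show ?thesis
  proof (cases "nsq n ?w > 0")
    case True
    have "qf n H ?w * qf n H v \<le> (q * nsq n ?w) * (q * nsq n v)"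
      by (intro mult_mono up psd) (use True q0 nsq_nonneg in auto)
    with 1 have "nsq n ?w * nsq n ?w \<le> nsq n ?w * (q\<^sup>2 * nsq n v)"
      by (simp add: power2_eq_square algebra_simps)
    with True show ?thesis by simp
  next
    case False
    thus ?thesis using nsq_nonneg[of n ?w] nsq_nonneg[of n v] by (simp add: not_less)
  qed
qed

lemma madj_cmmul: "madj (cmmul n A B) = cmmul n (madj B) (madj A)"
  by (auto simp: fun_eq_iff madj_def cmmul_def cnj_sum mult.commute)

lemma mat_on_madj: "mat_on n A \<Longrightarrow> mat_on n (madj A)"
  unfolding mat_on_def madj_def by (metis complex_cnj_zero)

lemma herm_madj: "mat_on n A \<Longrightarrow> herm n A \<Longrightarrow> madj A = A"
  unfolding fun_eq_iff madj_def
  by (metis (no_types, lifting) complex_cnj_cnj complex_cnj_zero hermD mat_on_def)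

lemma madj_herm: "madj A = A \<Longrightarrow> herm n A"
  unfolding herm_def madj_def fun_eq_iff by (metis complex_cnj_cnj)

lemma madj_cid: "madj (cid n) = cid n" by (simp add: fun_eq_iff madj_def cid_in)

lemma msa_cnj_iff: "A \<in> msa cnj n \<longleftrightarrow> mat_on n A \<and> herm n A"
  by (simp add: msa_def herm_def)

lemma pos_inv_iff: "pos_inv n Y \<longleftrightarrow> mat_on n Y \<and> herm n Y \<and> (\<forall>v. 0 \<le> qf n Y v)
    \<and> (\<exists>Z. mat_on n Z \<and> cmmul n Y Z = cid n \<and> cmmul n Z Y = cid n)"
proof -
  have "(\<Sum>i<n. \<Sum>j<n. cnj (v i) * Y i j * v j) = ip n v (mv n Y v)" for v
    by (simp add: ip_def mv_def sum_distrib_left mult.assoc)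
  thus ?thesis by (simp add: pos_inv_def msa_cnj_iff qf_def)
qed

lemma inv_herm:
  assumes "mat_on n Y" "herm n Y" "mat_on n Z" "cmmul n Y Z = cid n" "cmmul n Z Y = cid n"
  shows "herm n Z"
proof -
  have "cmmul n (madj Z) Y = cid n"
    using madj_cmmul[of n Y Z] assms herm_madj[of n Y] by (simp add: madj_cid)
  have "madj Z = cmmul n (madj Z) (cmmul n Y Z)"
    using assms by (simp add: cmmul_cid_right mat_on_madj)
  also have "\<dots> = cmmul n (cmmul n (madj Z) Y) Z" by (simp add: cmmul_assoc)
  also have "\<dots> = Z" using assms \<open>cmmul n (madj Z) Y = cid n\<close> by (simp add: cmmul_cid_left)
  finally show ?thesis by (rule madj_herm)
qed

lemma herm_qf_real: "herm n H \<Longrightarrow> ip n v (mv n H v) = complex_of_real (qf n H v)"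
proof -
  assume h: "herm n H"
  have "cnj (ip n v (mv n H v)) = ip n v (mv n H v)"
    by (simp add: ip_cnj herm_ip[OF h])
  hence "Im (ip n v (mv n H v)) = 0" by (metis Reals_cnj_iff complex_is_Real_iff)
  thus ?thesis by (simp add: qf_def complex_eq_iff)
qed



fun mpow :: "nat \<Rightarrow> (nat \<Rightarrow> nat \<Rightarrow> complex) \<Rightarrow> nat \<Rightarrow> nat \<Rightarrow> nat \<Rightarrow> complex" where
  "mpow n H 0 = cid n"
| "mpow n H (Suc k) = cmmul n H (mpow n H k)"

lemma mat_on_mpow[simp]: "mat_on n (mpow n H k)"
  by (cases k) simp_all

lemma mpow_add: "cmmul n (mpow n H k) (mpow n H l) = mpow n H (k + l)"
  by (induction k) (simp_all add: cmmul_cid_left cmmul_assoc)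

lemma mpow_comm:
  assumes "mat_on n C" "cmmul n C H = cmmul n H C"
  shows "cmmul n C (mpow n H k) = cmmul n (mpow n H k) C"
proof (induction k)
  case 0 thus ?case using assms by (simp add: cmmul_cid_left cmmul_cid_right)
next
  case (Suc k)
  have "cmmul n C (mpow n H (Suc k)) = cmmul n (cmmul n C H) (mpow n H k)" by (simp add: cmmul_assoc)
  also have "\<dots> = cmmul n H (cmmul n C (mpow n H k))" using assms by (simp add: cmmul_assoc)
  also have "\<dots> = cmmul n (mpow n H (Suc k)) C" using Suc by (simp add: cmmul_assoc)
  finally show ?case .
qed

lemma mv_cid: "i < n \<Longrightarrow> mv n (cid n) v i = v i"
proof -
  assume i: "i < n"
  have "mv n (cid n) v i = (\<Sum>j<n. if i = j then v j else 0)"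
    unfolding mv_def by (rule sum.cong) (auto simp: cid_in i)
  thus ?thesis using i by simp
qed

lemma mpow_vec_bnd:
  assumes b: "\<And>v. nsq n (mv n H v) \<le> q\<^sup>2 * nsq n v"
  shows "nsq n (mv n (mpow n H k) v) \<le> (q\<^sup>2)^k * nsq n v"
proof (induction k)
  case 0 thus ?case by (simp add: mv_cid cong: nsq_cong)
next
  case (Suc k)
  have "nsq n (mv n (mpow n H (Suc k)) v) = nsq n (mv n H (mv n (mpow n H k) v))"
    by (rule nsq_cong) (simp add: mv_cmmul)
  also have "\<dots> \<le> q\<^sup>2 * nsq n (mv n (mpow n H k) v)" by (rule b)
  also have "\<dots> \<le> q\<^sup>2 * ((q\<^sup>2)^k * nsq n v)" by (intro mult_left_mono Suc) simp
  finally show ?case by simp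
qed

lemma entry_le_nsq: "i < n \<Longrightarrow> (cmod (v i))\<^sup>2 \<le> nsq n v"
  unfolding nsq_def by (rule member_le_sum) auto

lemma mpow_entry_bnd:
  assumes b: "\<And>v. nsq n (mv n H v) \<le> q\<^sup>2 * nsq n v" and q: "0 \<le> q" and i: "i < n" and j: "j < n"
  shows "cmod (mpow n H k i j) \<le> q ^ k"
proof -
  define e where "e = (\<lambda>p::nat. if p = j then (1::complex) else 0)"
  have "mv n (mpow n H k) e i = (\<Sum>p<n. if p = j then mpow n H k i p else 0)"
    unfolding mv_def e_def by (rule sum.cong) auto
  hence eq: "mpow n H k i j = mv n (mpow n H k) e i" using j by simp
  have "nsq n e = (\<Sum>p<n. if p = j then 1 else 0)"
    unfolding nsq_def e_def by (rule sum.cong) auto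
  hence e1: "nsq n e = 1" using j by simp
  have "(cmod (mpow n H k i j))\<^sup>2 = (cmod (mv n (mpow n H k) e i))\<^sup>2" by (simp only: eq)
  also have "\<dots> \<le> nsq n (mv n (mpow n H k) e)" by (rule entry_le_nsq[OF i])
  also have "\<dots> \<le> (q\<^sup>2)^k * nsq n e" by (rule mpow_vec_bnd[OF b])
  also have "\<dots> = (q ^ k)\<^sup>2" by (simp only: e1 mult_1_right power2_eq_square power_mult_distrib)
  finally have "(cmod (mpow n H k i j))\<^sup>2 \<le> (q ^ k)\<^sup>2" .
  thus ?thesis by (rule power2_le_imp_le[OF _ zero_le_power[OF q]])
qed

lemma gchoose_abs_summable:
  fixes r q :: real
  assumes "0 \<le> q" "q < 1"
  shows "summable (\<lambda>k. \<bar>r gchoose k\<bar> * q ^ k)"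
proof -
  have "ereal (norm q) < conv_radius (\<lambda>k. r gchoose k)"
    using assms by (simp add: conv_radius_gchoose)
  from abs_summable_in_conv_radius[OF this] show ?thesis
    using assms by (simp add: abs_mult power_abs)
qed

definition mnegH :: "(nat \<Rightarrow> nat \<Rightarrow> complex) \<Rightarrow> nat \<Rightarrow> nat \<Rightarrow> complex" where
  "mnegH H = (\<lambda>i j. - H i j)"

definition fser :: "nat \<Rightarrow> real \<Rightarrow> (nat \<Rightarrow> nat \<Rightarrow> complex) \<Rightarrow> nat \<Rightarrow> nat \<Rightarrow> complex" where
  "fser n r H = (\<lambda>i j. if i < n \<and> j < n
      then (\<Sum>k. complex_of_real (r gchoose k) * mpow n (mnegH H) k i j) else 0)"

lemma mat_on_fser[simp]: "mat_on n (fser n r H)"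
  unfolding mat_on_def fser_def by auto

lemma nsq_mv_mneg: "nsq n (mv n (mnegH H) v) = nsq n (mv n H v)"
  unfolding nsq_def mv_def mnegH_def by (simp add: sum_negf)

definition bnd :: "nat \<Rightarrow> (nat \<Rightarrow> nat \<Rightarrow> complex) \<Rightarrow> real \<Rightarrow> bool" where
  "bnd n H q \<longleftrightarrow> 0 \<le> q \<and> q < 1 \<and> (\<forall>v. nsq n (mv n H v) \<le> q\<^sup>2 * nsq n v)"

lemma term_summable:
  assumes "bnd n H q" "i < n" "j < n"
  shows "summable (\<lambda>k. norm (complex_of_real (r gchoose k) * mpow n (mnegH H) k i j))"
proof (rule summable_comparison_test[OF _ gchoose_abs_summable[of q r]])
  have b: "\<And>v. nsq n (mv n (mnegH H) v) \<le> q\<^sup>2 * nsq n v"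
    using assms(1) by (simp add: bnd_def nsq_mv_mneg)
  show "\<exists>N. \<forall>k\<ge>N. norm (norm (complex_of_real (r gchoose k) * mpow n (mnegH H) k i j)) \<le> \<bar>r gchoose k\<bar> * q ^ k"
    using mpow_entry_bnd[OF b _ assms(2,3)] assms(1)
    by (auto simp: norm_mult bnd_def intro!: mult_left_mono)
qed (use assms in \<open>auto simp: bnd_def\<close>)

lemma term_summable':
  assumes "bnd n H q" "i < n" "j < n"
  shows "summable (\<lambda>k. complex_of_real (r gchoose k) * mpow n (mnegH H) k i j)"
  using summable_norm_cancel[OF term_summable[OF assms]] .

lemma fser_in: "i < n \<Longrightarrow> j < n \<Longrightarrow> fser n r H i j = (\<Sum>k. complex_of_real (r gchoose k) * mpow n (mnegH H) k i j)"
  by (simp add: fser_def)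

lemma fser_mult:
  assumes b: "bnd n H q"
  shows "cmmul n (fser n r H) (fser n s H) = fser n (r + s) H"
proof (intro ext)
  fix i j
  show "cmmul n (fser n r H) (fser n s H) i j = fser n (r + s) H i j"
  proof (cases "i < n \<and> j < n")
    case False
    have "fser n (r + s) H i j = 0" unfolding fser_def using False by auto
    thus ?thesis using cmmul_out[OF False] by simp
  next
    case True
    hence i: "i < n" and j: "j < n" by auto
    let ?P = "mpow n (mnegH H)"
    define a where "a = (\<lambda>p k. complex_of_real (r gchoose k) * ?P k i p)"
    define c where "c = (\<lambda>p k. complex_of_real (s gchoose k) * ?P k p j)"
    have "cmmul n (fser n r H) (fser n s H) i j = (\<Sum>p<n. (\<Sum>k. a p k) * (\<Sum>k. c p k))"
      unfolding cmmul_in[OF i j] a_def c_def by (intro sum.cong refl) (simp add: fser_in i j)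
    also have "\<dots> = (\<Sum>p<n. \<Sum>m. \<Sum>k\<le>m. a p k * c p (m - k))"
    proof (intro sum.cong refl Cauchy_product)
      fix p assume "p \<in> {..<n}"
      thus "summable (\<lambda>k. norm (a p k))" "summable (\<lambda>k. norm (c p k))"
        unfolding a_def c_def using term_summable[OF b] i j by auto
    qed
    also have "\<dots> = (\<Sum>m. \<Sum>p<n. \<Sum>k\<le>m. a p k * c p (m - k))"
    proof (rule suminf_sum[symmetric])
      fix p assume "p \<in> {..<n}"
      thus "summable (\<lambda>m. \<Sum>k\<le>m. a p k * c p (m - k))"
        unfolding a_def c_def using term_summable[OF b] i j by (intro summable_Cauchy_product) auto
    qed
    also have "\<dots> = (\<Sum>m. complex_of_real ((r + s) gchoose m) * ?P m i j)"
    proof (intro suminf_cong)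
      fix m
      have "(\<Sum>p<n. \<Sum>k\<le>m. a p k * c p (m - k))
          = (\<Sum>k\<le>m. complex_of_real (r gchoose k) * complex_of_real (s gchoose (m - k)) * (\<Sum>p<n. ?P k i p * ?P (m - k) p j))"
        unfolding a_def c_def by (subst sum.swap) (simp add: sum_distrib_left mult_ac)
      also have "\<dots> = (\<Sum>k\<le>m. complex_of_real (r gchoose k) * complex_of_real (s gchoose (m - k)) * ?P m i j)"
      proof (intro sum.cong refl)
        fix k assume "k \<in> {..m}"
        hence "k + (m - k) = m" by simp
        hence "(\<Sum>p<n. ?P k i p * ?P (m - k) p j) = ?P m i j"
          using mpow_add[of n "mnegH H" k "m - k"] cmmul_in[OF i j, of "?P k" "?P (m - k)"] by simp
        thus "complex_of_real (r gchoose k) * complex_of_real (s gchoose (m - k)) * (\<Sum>p<n. ?P k i p * ?P (m - k) p j)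
            = complex_of_real (r gchoose k) * complex_of_real (s gchoose (m - k)) * ?P m i j" by simp
      qed
      also have "\<dots> = complex_of_real (\<Sum>k\<le>m. (r gchoose k) * (s gchoose (m - k))) * ?P m i j"
        by (simp add: sum_distrib_right)
      also have "(\<Sum>k\<le>m. (r gchoose k) * (s gchoose (m - k))) = (r + s) gchoose m"
        using gbinomial_Vandermonde[of r s m] by (simp add: atLeast0AtMost)
      finally show "(\<Sum>p<n. \<Sum>k\<le>m. a p k * c p (m - k)) = complex_of_real ((r + s) gchoose m) * ?P m i j" .
    qed
    also have "\<dots> = fser n (r + s) H i j" by (simp add: fser_in i j)
    finally show ?thesis .
  qed
qed



lemma mat_on_mnegH[simp]: "mat_on n H \<Longrightarrow> mat_on n (mnegH H)"
  by (simp add: mat_on_def mnegH_def)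

lemma herm_mnegH: assumes "herm n H" shows "herm n (mnegH H)"
  unfolding herm_def mnegH_def by (intro allI impI) (metis hermD[OF assms] complex_cnj_minus)

lemma bnd_mnegH_iff: "(\<forall>v. nsq n (mv n (mnegH H) v) \<le> q\<^sup>2 * nsq n v) \<longleftrightarrow> (\<forall>v. nsq n (mv n H v) \<le> q\<^sup>2 * nsq n v)"
  by (simp add: nsq_mv_mneg)

lemma cmmul_mnegH_right: "cmmul n C (mnegH H) = mnegH (cmmul n C H)"
  by (auto simp: fun_eq_iff cmmul_def mnegH_def sum_negf)
lemma cmmul_mnegH_left: "cmmul n (mnegH H) C = mnegH (cmmul n H C)"
  by (auto simp: fun_eq_iff cmmul_def mnegH_def sum_negf)

lemma suminf_single0:
  fixes f :: "nat \<Rightarrow> 'a::{t2_space, comm_monoid_add}"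
  shows "(\<And>k. k > 0 \<Longrightarrow> f k = 0) \<Longrightarrow> suminf f = f 0"
  using suminf_finite[of "{0}" f] by auto

lemma fser_0: "fser n 0 H = cid n"
proof (intro ext)
  fix i j
  show "fser n 0 H i j = cid n i j"
  proof (cases "i < n \<and> j < n")
    case True
    have "fser n 0 H i j = complex_of_real (0 gchoose 0) * mpow n (mnegH H) 0 i j"
      unfolding fser_in[OF True[THEN conjunct1] True[THEN conjunct2]]
      by (rule suminf_single0) (simp add: gbinomial_0_left)
    thus ?thesis by simp
  next
    case False
    have "fser n 0 H i j = 0" unfolding fser_def using False by auto
    moreover have "cid n i j = 0" using False by (auto simp: cid_in)
    ultimately show ?thesis by simp
  qed
qed

lemma gchoose_one_ge2: "k \<ge> 2 \<Longrightarrow> ((1::real) gchoose k) = 0"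
proof -
  assume "k \<ge> 2"
  have "((1::real) gchoose k) = of_nat (1 choose k)"
    using binomial_gbinomial[of 1 k, where 'a=real] by simp
  also have "(1 choose k) = 0" using \<open>k \<ge> 2\<close> by (simp add: binomial_eq_0)
  finally show ?thesis by simp
qed

lemma fser_1: "mat_on n H \<Longrightarrow> fser n 1 H = (\<lambda>i j. cid n i j - H i j)"
proof (intro ext)
  fix i j assume H: "mat_on n H"
  show "fser n 1 H i j = cid n i j - H i j"
  proof (cases "i < n \<and> j < n")
    case True
    have "fser n 1 H i j = (\<Sum>k\<in>{0,1}. complex_of_real (1 gchoose k) * mpow n (mnegH H) k i j)"
      unfolding fser_in[OF True[THEN conjunct1] True[THEN conjunct2]]
    proof (rule suminf_finite)
      fix k :: nat assume "k \<notin> {0, 1}"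
      hence "k \<ge> 2" by auto
      thus "complex_of_real (1 gchoose k) * mpow n (mnegH H) k i j = 0" by (simp add: gchoose_one_ge2)
    qed simp
    also have "\<dots> = cid n i j + mnegH H i j"
      using H by (simp add: cmmul_cid_right)
    finally show ?thesis by (simp add: mnegH_def)
  next
    case False
    have "fser n 1 H i j = 0" unfolding fser_def using False by auto
    moreover have "cid n i j = 0" using False by (auto simp: cid_in)
    moreover have "H i j = 0" using False H by (auto simp: mat_on_def)
    ultimately show ?thesis by simp
  qed
qed

lemma herm_cmmul_comm:
  assumes "herm n A" "herm n B" "cmmul n A B = cmmul n B A"
  shows "herm n (cmmul n A B)"
  unfolding herm_def
proof (intro allI impI)
  fix i j assume i: "i < n" and j: "j < n"
  have "cnj (cmmul n A B j i) = (\<Sum>p<n. cnj (A j p) * cnj (B p i))"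
    by (simp add: cmmul_in i j cnj_sum)
  also have "\<dots> = (\<Sum>p<n. B i p * A p j)"
    by (intro sum.cong refl) (metis assms(1,2) hermD i j lessThan_iff mult.commute)
  also have "\<dots> = cmmul n B A i j" by (simp add: cmmul_in i j)
  finally show "cmmul n A B i j = cnj (cmmul n A B j i)" using assms(3) by simp
qed

lemma herm_cid: "herm n (cid n)" by (simp add: herm_def cid_in)

lemma herm_mpow: "herm n P \<Longrightarrow> mat_on n P \<Longrightarrow> herm n (mpow n P k)"
proof (induction k)
  case 0 thus ?case by (simp add: herm_cid)
next
  case (Suc k)
  thus ?case using mpow_comm[of n P P k] by (simp add: herm_cmmul_comm)
qed

lemma suminf_cnj': "summable f \<Longrightarrow> cnj (suminf f) = (\<Sum>k. cnj (f k))"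
  by (metis sums_cnj summable_sums sums_unique)

lemma fser_herm:
  assumes b: "bnd n H q" and h: "herm n H" and m: "mat_on n H"
  shows "herm n (fser n r H)"
  unfolding herm_def
proof (intro allI impI)
  fix i j assume i: "i < n" and j: "j < n"
  have hp: "herm n (mpow n (mnegH H) k)" for k
    by (rule herm_mpow) (simp_all add: herm_mnegH h m)
  have "cnj (fser n r H j i) = (\<Sum>k. cnj (complex_of_real (r gchoose k) * mpow n (mnegH H) k j i))"
    by (simp add: fser_in i j suminf_cnj'[OF term_summable'[OF b j i]])
  also have "\<dots> = (\<Sum>k. complex_of_real (r gchoose k) * mpow n (mnegH H) k i j)"
    by (intro suminf_cong) (metis complex_cnj_cnj complex_cnj_complex_of_real complex_cnj_mult hermD hp i j)
  finally show "fser n r H i j = cnj (fser n r H j i)" by (simp add: fser_in i j)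
qed

lemma fser_comm:
  assumes b: "bnd n H q" and m: "mat_on n H" and c: "mat_on n C" and cm: "cmmul n C H = cmmul n H C"
  shows "cmmul n C (fser n r H) = cmmul n (fser n r H) C"
proof (intro ext)
  fix i j
  show "cmmul n C (fser n r H) i j = cmmul n (fser n r H) C i j"
  proof (cases "i < n \<and> j < n")
    case False thus ?thesis using cmmul_out[OF False] by simp
  next
    case True
    hence i: "i < n" and j: "j < n" by auto
    let ?P = "mpow n (mnegH H)"
    let ?a = "\<lambda>k. complex_of_real (r gchoose k)"
    have cP: "cmmul n C (?P k) = cmmul n (?P k) C" for k
      by (rule mpow_comm[OF c]) (simp add: cmmul_mnegH_right cmmul_mnegH_left cm)
    have "cmmul n C (fser n r H) i j = (\<Sum>p<n. C i p * (\<Sum>k. ?a k * ?P k p j))"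
      unfolding cmmul_in[OF i j] by (intro sum.cong refl) (simp add: fser_in j)
    also have "\<dots> = (\<Sum>p<n. \<Sum>k. C i p * (?a k * ?P k p j))"
      by (intro sum.cong refl suminf_mult[symmetric] term_summable'[OF b]) (auto simp: j)
    also have "\<dots> = (\<Sum>k. \<Sum>p<n. C i p * (?a k * ?P k p j))"
      by (intro suminf_sum[symmetric] summable_mult term_summable'[OF b]) (auto simp: j)
    also have "\<dots> = (\<Sum>k. ?a k * cmmul n C (?P k) i j)"
      by (intro suminf_cong) (simp add: cmmul_in i j sum_distrib_left mult_ac)
    also have "\<dots> = (\<Sum>k. ?a k * cmmul n (?P k) C i j)" by (simp add: cP)
    also have "\<dots> = (\<Sum>k. \<Sum>p<n. (?a k * ?P k i p) * C p j)"
      by (intro suminf_cong) (simp add: cmmul_in i j sum_distrib_left mult_ac)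
    also have "\<dots> = (\<Sum>p<n. \<Sum>k. (?a k * ?P k i p) * C p j)"
      by (intro suminf_sum summable_mult2 term_summable'[OF b]) (auto simp: i)
    also have "\<dots> = (\<Sum>p<n. (\<Sum>k. ?a k * ?P k i p) * C p j)"
      by (intro sum.cong refl suminf_mult2[symmetric] term_summable'[OF b]) (auto simp: i)
    also have "\<dots> = cmmul n (fser n r H) C i j"
      unfolding cmmul_in[OF i j] by (intro sum.cong refl) (simp add: fser_in i)
    finally show ?thesis .
  qed
qed



definition msc :: "complex \<Rightarrow> (nat \<Rightarrow> nat \<Rightarrow> complex) \<Rightarrow> nat \<Rightarrow> nat \<Rightarrow> complex" where
  "msc c A = (\<lambda>i j. c * A i j)"

lemma mat_on_msc[simp]: "mat_on n A \<Longrightarrow> mat_on n (msc c A)"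
  by (simp add: mat_on_def msc_def)

lemma cmmul_msc: "cmmul n (msc a A) (msc b B) = msc (a * b) (cmmul n A B)"
  by (auto simp: fun_eq_iff cmmul_def msc_def sum_distrib_left mult_ac)

lemma cmmul_msc_left: "cmmul n (msc a A) B = msc a (cmmul n A B)"
  by (auto simp: fun_eq_iff cmmul_def msc_def sum_distrib_left mult_ac)
lemma cmmul_msc_right: "cmmul n A (msc a B) = msc a (cmmul n A B)"
  by (auto simp: fun_eq_iff cmmul_def msc_def sum_distrib_left mult_ac)

lemma herm_msc: assumes "herm n A" shows "herm n (msc (complex_of_real c) A)"
  unfolding herm_def msc_def
  by (intro allI impI) (metis hermD[OF assms] complex_cnj_complex_of_real complex_cnj_mult)

lemma mv_madd: "mv n (\<lambda>i j. A i j + c * B i j) v = (\<lambda>i. mv n A v i + c * mv n B v i)"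
  unfolding mv_def by (simp add: algebra_simps sum.distrib sum_distrib_left)

lemma cmmul_lin_right: "cmmul n A (\<lambda>i j. B i j + c * C i j) = (\<lambda>i j. cmmul n A B i j + c * cmmul n A C i j)"
  by (auto simp: fun_eq_iff cmmul_def algebra_simps sum.distrib sum_distrib_left)
lemma cmmul_lin_left: "cmmul n (\<lambda>i j. B i j + c * C i j) A = (\<lambda>i j. cmmul n B A i j + c * cmmul n C A i j)"
  by (auto simp: fun_eq_iff cmmul_def algebra_simps sum.distrib sum_distrib_left)

lemma qf_cid: "qf n (cid n) v = nsq n v"
proof -
  have "ip n v (mv n (cid n) v) = ip n v v" by (rule ip_cong) (simp_all add: mv_cid)
  thus ?thesis by (simp add: qf_def ip_self)
qed

lemma qf_lin: "qf n (\<lambda>i j. A i j + complex_of_real c * B i j) v = qf n A v + c * qf n B v"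
  unfolding qf_def mv_madd ip_lin_right by simp

lemma qf_msc: "qf n (msc (complex_of_real c) A) v = c * qf n A v"
proof -
  have "mv n (msc (complex_of_real c) A) v = (\<lambda>i. complex_of_real c * mv n A v i)"
    by (simp add: mv_def msc_def sum_distrib_left mult.assoc)
  thus ?thesis by (simp add: qf_def ip_def sum_distrib_left mult_ac)
qed

lemma qf_square: assumes "herm n T" shows "qf n (cmmul n T T) v = nsq n (mv n T v)"
proof -
  have "ip n v (mv n (cmmul n T T) v) = ip n v (mv n T (mv n T v))"
    by (rule ip_cong) (simp_all add: mv_cmmul)
  also have "\<dots> = ip n (mv n T v) (mv n T v)" by (rule herm_ip[OF assms])
  finally show ?thesis by (simp add: qf_def ip_self)
qed

lemma mv_inv: "cmmul n A B = cid n \<Longrightarrow> i < n \<Longrightarrow> mv n A (mv n B v) i = v i"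
  by (metis mv_cid mv_cmmul)

lemma nsq_zero: "nsq n v = 0 \<Longrightarrow> i < n \<Longrightarrow> v i = 0"
  unfolding nsq_def by (subst (asm) sum_nonneg_eq_0_iff) auto

lemma sqrt_exists:
  assumes pY: "pos_inv n Y"
  shows "\<exists>S. mat_on n S \<and> pos_inv n S \<and> cmmul n (cmmul n S S) Y = cid n"
proof -
  from pY obtain Z where mY: "mat_on n Y" and hY: "herm n Y" and psdY: "\<And>v. 0 \<le> qf n Y v"
    and mZ: "mat_on n Z" and YZ: "cmmul n Y Z = cid n" and ZY: "cmmul n Z Y = cid n"
    unfolding pos_inv_iff by blast
  have hZ: "herm n Z" by (rule inv_herm[OF mY hY mZ YZ ZY])
  define cY where "cY = sqrt (fro n Y) + 1"
  define cZ where "cZ = sqrt (fro n Z) + 1"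
  have cY1: "1 \<le> cY" and cZ1: "1 \<le> cZ" by (simp_all add: cY_def cZ_def fro_nonneg)
  have lower: "nsq n v \<le> cY * qf n Z v" for v
  proof -
    define w where "w = mv n Z v"
    have vw: "\<And>i. i < n \<Longrightarrow> mv n Y w i = v i" unfolding w_def by (rule mv_inv[OF YZ])
    have "ip n v (mv n Z v) = ip n (mv n Y w) w"
      by (rule ip_cong) (simp_all add: vw[symmetric] w_def)
    also have "\<dots> = ip n w (mv n Y w)" by (rule herm_ip[OF hY, symmetric])
    finally have qZ: "qf n Z v = qf n Y w" by (simp add: qf_def)
    have nv: "nsq n v = nsq n (mv n Y w)" by (rule nsq_cong) (simp add: vw)
    let ?u = "mv n Y w"
    have "(cmod (ip n ?u (mv n Y w)))\<^sup>2 \<le> qf n Y ?u * qf n Y w" by (rule cs_psd[OF hY psdY])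
    hence 1: "(nsq n ?u)\<^sup>2 \<le> qf n Y ?u * qf n Y w" by (simp add: ip_self nsq_nonneg)
    have "qf n Y ?u \<le> cY * nsq n ?u"
      using qf_upper[of n Y ?u] nsq_nonneg[of n ?u] unfolding cY_def by (simp add: algebra_simps)
    hence "qf n Y ?u * qf n Y w \<le> (cY * nsq n ?u) * qf n Y w" by (intro mult_right_mono psdY)
    with 1 have 2: "nsq n ?u * nsq n ?u \<le> nsq n ?u * (cY * qf n Y w)" by (simp add: power2_eq_square mult_ac)
    have "nsq n ?u \<le> cY * qf n Y w"
    proof (cases "nsq n ?u = 0")
      case True thus ?thesis using cY1 psdY[of w] by simp
    next
      case False
      hence "0 < nsq n ?u" using nsq_nonneg[of n ?u] by simp
      with 2 show ?thesis by simp
    qed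
    thus ?thesis by (simp add: nv qZ)
  qed
  have upper: "qf n Z v \<le> cZ * nsq n v" for v
    using qf_upper[of n Z v] nsq_nonneg[of n v] unfolding cZ_def by (simp add: algebra_simps)
  define H where "H = (\<lambda>i j. cid n i j + complex_of_real (- 1 / cZ) * Z i j)"
  have mH: "mat_on n H" using mZ by (simp add: H_def mat_on_def cid_in)
  have hH: "herm n H" unfolding herm_def H_def
    by (intro allI impI) (metis hermD[OF hZ] hermD[OF herm_cid] complex_cnj_add complex_cnj_complex_of_real complex_cnj_mult)
  have qH: "qf n H v = nsq n v - qf n Z v / cZ" for v
    unfolding H_def qf_lin qf_cid by simp
  define q0 where "q0 = 1 - 1 / (cY * cZ)"
  have c1: "1 \<le> cY * cZ" using mult_mono[OF cY1 cZ1] cY1 by simp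
  have q0: "0 \<le> q0" "q0 < 1" using c1 by (simp_all add: q0_def field_simps)
  have psdH: "0 \<le> qf n H v" for v
    using upper[of v] cZ1 by (simp add: qH field_simps)
  have upH: "qf n H v \<le> q0 * nsq n v" for v
  proof -
    have "nsq n v / (cY * cZ) \<le> qf n Z v / cZ"
      using lower[of v] cY1 cZ1 by (simp add: field_simps)
    thus ?thesis by (simp add: qH q0_def algebra_simps)
  qed
  have bH: "bnd n H q0" unfolding bnd_def
    using q0 bnd_from_psd[OF hH psdH upH] by blast
  define T where "T = fser n (1/4) H"
  define F where "F = fser n (1/2) H"
  have TT: "cmmul n T T = F" unfolding T_def F_def by (simp add: fser_mult[OF bH])
  have FF: "cmmul n F F = fser n 1 H" unfolding F_def by (simp add: fser_mult[OF bH])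
  have hT: "herm n T" unfolding T_def by (rule fser_herm[OF bH hH mH])
  define S where "S = msc (complex_of_real (sqrt cZ)) F"
  have mS: "mat_on n S" by (simp add: S_def F_def)
  have hS: "herm n S" unfolding S_def F_def by (rule herm_msc[OF fser_herm[OF bH hH mH]])
  have SS: "cmmul n S S = Z"
  proof -
    have "cmmul n S S = msc (complex_of_real cZ) (fser n 1 H)"
      using cZ1 by (simp add: S_def cmmul_msc FF flip: of_real_mult)
    also have "\<dots> = Z"
      unfolding fser_1[OF mH] using cZ1 mZ by (auto simp: msc_def H_def fun_eq_iff cid_in mat_on_def)
    finally show ?thesis .
  qed
  have psdS: "0 \<le> qf n S v" for v
    unfolding S_def qf_msc TT[symmetric] qf_square[OF hT]
    by (intro mult_nonneg_nonneg) (use cZ1 nsq_nonneg in auto)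
  have YH: "cmmul n Y H = cmmul n H Y"
    unfolding H_def cmmul_lin_right cmmul_lin_left YZ ZY
    using mY by (simp add: cmmul_cid_left cmmul_cid_right)
  have YS: "cmmul n Y S = cmmul n S Y"
    unfolding S_def cmmul_msc_left cmmul_msc_right F_def
    by (simp add: fser_comm[OF bH mH mY YH])
  have inv1: "cmmul n S (cmmul n S Y) = cid n" by (simp add: cmmul_assoc[symmetric] SS ZY)
  have inv2: "cmmul n (cmmul n S Y) S = cid n"
    using inv1 by (simp only: cmmul_assoc YS)
  have "pos_inv n S" unfolding pos_inv_iff
    using mS hS psdS inv1 inv2 by (intro conjI allI exI[of _ "cmmul n S Y"]) auto
  moreover have "cmmul n (cmmul n S S) Y = cid n" by (simp add: SS ZY)
  ultimately show ?thesis using mS by blast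
qed



lemma sum3_rot:
  fixes f :: "nat \<Rightarrow> nat \<Rightarrow> nat \<Rightarrow> complex"
  shows "(\<Sum>i<n. \<Sum>p<n. \<Sum>q<n. f q i p) = (\<Sum>i<n. \<Sum>p<n. \<Sum>q<n. f i p q)"
proof -
  have "(\<Sum>i<n. \<Sum>p<n. \<Sum>q<n. f q i p) = (\<Sum>i<n. \<Sum>q<n. \<Sum>p<n. f q i p)"
    by (intro sum.cong refl sum.swap)
  also have "\<dots> = (\<Sum>q<n. \<Sum>i<n. \<Sum>p<n. f q i p)" by (rule sum.swap)
  finally show ?thesis .
qed

lemma sqrt_unique:
  assumes pY: "pos_inv n Y"
    and m1: "mat_on n S1" and p1: "pos_inv n S1" and e1: "cmmul n (cmmul n S1 S1) Y = cid n"
    and m2: "mat_on n S2" and p2: "pos_inv n S2" and e2: "cmmul n (cmmul n S2 S2) Y = cid n"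
  shows "S1 = S2"
proof -
  from pY obtain Z where mZ: "mat_on n Z" and YZ: "cmmul n Y Z = cid n"
    unfolding pos_inv_iff by blast
  have SZ: "cmmul n S1 S1 = Z" "cmmul n S2 S2 = Z"
  proof -
    have "cmmul n S1 S1 = cmmul n (cmmul n S1 S1) (cmmul n Y Z)" by (simp add: YZ cmmul_cid_right)
    also have "\<dots> = Z" by (simp add: cmmul_assoc[symmetric] e1 cmmul_cid_left mZ)
    finally show "cmmul n S1 S1 = Z" .
    have "cmmul n S2 S2 = cmmul n (cmmul n S2 S2) (cmmul n Y Z)" by (simp add: YZ cmmul_cid_right)
    also have "\<dots> = Z" by (simp add: cmmul_assoc[symmetric] e2 cmmul_cid_left mZ)
    finally show "cmmul n S2 S2 = Z" .
  qed
  from p1 obtain W1 where h1: "herm n S1" and psd1: "\<And>v. 0 \<le> qf n S1 v"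
    and W1: "cmmul n W1 S1 = cid n" unfolding pos_inv_iff by blast
  from p2 have h2: "herm n S2" and psd2: "\<And>v. 0 \<le> qf n S2 v" unfolding pos_inv_iff by blast+
  define D where "D = (\<lambda>i j. S1 i j - S2 i j)"
  have hD: "\<And>i j. i < n \<Longrightarrow> j < n \<Longrightarrow> cnj (D i j) = D j i"
    unfolding D_def by (metis complex_cnj_diff hermD h1 h2)
  have key: "(\<Sum>q<n. S1 p q * D q i) + (\<Sum>q<n. D p q * S2 q i) = 0" if "p < n" "i < n" for p i
  proof -
    have "(\<Sum>q<n. S1 p q * D q i) + (\<Sum>q<n. D p q * S2 q i)
        = cmmul n S1 S1 p i - cmmul n S2 S2 p i"
      using that by (simp add: D_def cmmul_in algebra_simps sum_subtractf)
    thus ?thesis by (simp add: SZ)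
  qed
  define c where "c = (\<lambda>i p. D p i)"
  have ip1: "ip n (c i) (mv n S1 (c i)) = (\<Sum>p<n. \<Sum>q<n. D i p * S1 p q * D q i)" if "i < n" for i
    unfolding ip_def mv_def c_def using that
    by (intro sum.cong refl) (simp add: hD sum_distrib_left mult.assoc)
  have ip2: "ip n (c i) (mv n S2 (c i)) = (\<Sum>p<n. \<Sum>q<n. D i p * S2 p q * D q i)" if "i < n" for i
    unfolding ip_def mv_def c_def using that
    by (intro sum.cong refl) (simp add: hD sum_distrib_left mult.assoc)
  have "(\<Sum>i<n. \<Sum>p<n. \<Sum>q<n. D i p * S2 p q * D q i) = (\<Sum>i<n. \<Sum>p<n. \<Sum>q<n. D q i * D i p * S2 p q)"
    by (simp add: mult_ac)
  also have "\<dots> = (\<Sum>i<n. \<Sum>p<n. \<Sum>q<n. D i p * D p q * S2 q i)"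
    by (rule sum3_rot[where f = "\<lambda>i p q. D i p * D p q * S2 q i"])
  finally have rot: "(\<Sum>i<n. \<Sum>p<n. \<Sum>q<n. D i p * S2 p q * D q i) = (\<Sum>i<n. \<Sum>p<n. \<Sum>q<n. D i p * D p q * S2 q i)" .
  have "(\<Sum>i<n. ip n (c i) (mv n S1 (c i)) + ip n (c i) (mv n S2 (c i)))
      = (\<Sum>i<n. (\<Sum>p<n. \<Sum>q<n. D i p * S1 p q * D q i) + (\<Sum>p<n. \<Sum>q<n. D i p * S2 p q * D q i))"
    by (intro sum.cong refl) (simp add: ip1 ip2)
  also have "\<dots> = (\<Sum>i<n. \<Sum>p<n. \<Sum>q<n. D i p * S1 p q * D q i) + (\<Sum>i<n. \<Sum>p<n. \<Sum>q<n. D i p * S2 p q * D q i)"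
    by (rule sum.distrib)
  also have "\<dots> = (\<Sum>i<n. \<Sum>p<n. D i p * ((\<Sum>q<n. S1 p q * D q i) + (\<Sum>q<n. D p q * S2 q i)))"
  proof -
    have "(\<Sum>i<n. \<Sum>p<n. D i p * ((\<Sum>q<n. S1 p q * D q i) + (\<Sum>q<n. D p q * S2 q i)))
      = (\<Sum>i<n. \<Sum>p<n. \<Sum>q<n. D i p * S1 p q * D q i) + (\<Sum>i<n. \<Sum>p<n. \<Sum>q<n. D i p * D p q * S2 q i)"
      by (simp only: distrib_left sum_distrib_left mult.assoc sum.distrib)
    thus ?thesis by (simp only: rot)
  qed
  also have "\<dots> = 0"
    by (intro sum.neutral ballI) (auto intro!: sum.neutral simp: key)
  finally have tot0: "(\<Sum>i<n. ip n (c i) (mv n S1 (c i)) + ip n (c i) (mv n S2 (c i))) = 0" .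
  have "(\<Sum>i<n. qf n S1 (c i) + qf n S2 (c i)) = Re (\<Sum>i<n. ip n (c i) (mv n S1 (c i)) + ip n (c i) (mv n S2 (c i)))"
    by (simp only: Re_sum plus_complex.sel qf_def)
  hence tot: "(\<Sum>i<n. qf n S1 (c i) + qf n S2 (c i)) = 0" by (simp only: tot0 zero_complex.sel)
  have z1: "qf n S1 (c i) = 0" if "i < n" for i
  proof -
    have "\<forall>i\<in>{..<n}. qf n S1 (c i) + qf n S2 (c i) = 0"
      using tot by (subst (asm) sum_nonneg_eq_0_iff) (auto intro: add_nonneg_nonneg psd1 psd2)
    thus ?thesis using that psd1[of "c i"] psd2[of "c i"] by force
  qed
  have Dz: "D p i = 0" if "p < n" "i < n" for p i
  proof -
    let ?u = "mv n S1 (c i)"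
    have "(cmod (ip n ?u (mv n S1 (c i))))\<^sup>2 \<le> qf n S1 ?u * qf n S1 (c i)" by (rule cs_psd[OF h1 psd1])
    hence "(nsq n ?u)\<^sup>2 \<le> 0" by (simp add: ip_self nsq_nonneg z1 that)
    hence "nsq n ?u = 0" by simp
    hence u0: "\<And>k. k < n \<Longrightarrow> ?u k = 0" by (rule nsq_zero)
    have "c i p = mv n W1 ?u p" using mv_inv[OF W1 that(1), of "c i"] by simp
    also have "\<dots> = 0" unfolding mv_def[of n W1 "mv n S1 (c i)"] by (intro sum.neutral) (simp add: u0)
    finally show ?thesis by (simp add: c_def)
  qed
  show ?thesis
  proof (intro ext)
    fix p i
    show "S1 p i = S2 p i"
    proof (cases "p < n \<and> i < n")
      case True thus ?thesis using Dz[of p i] by (simp add: D_def)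
    next
      case False thus ?thesis using m1 m2 unfolding mat_on_def by auto
    qed
  qed
qed

lemma inv_sqrt_props:
  assumes "pos_inv n Y"
  shows "mat_on n (inv_sqrt n Y) \<and> pos_inv n (inv_sqrt n Y) \<and> cmmul n (cmmul n (inv_sqrt n Y) (inv_sqrt n Y)) Y = cid n"
proof -
  have "\<exists>!S. mat_on n S \<and> pos_inv n S \<and> cmmul n (cmmul n S S) Y = cid n"
    using sqrt_exists[OF assms] sqrt_unique[OF assms] by blast
  thus ?thesis unfolding inv_sqrt_def by (rule theI')
qed





definition frok :: "nat \<Rightarrow> nat \<Rightarrow> (nat \<Rightarrow> nat \<Rightarrow> complex) \<Rightarrow> real" where
  "frok n k X = (\<Sum>i<n. \<Sum>j<k. (cmod (X i j))\<^sup>2)"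

lemma opnorm_elem_le:
  assumes "(\<Sum>j<k. (cmod (v j))\<^sup>2) \<le> 1"
  shows "sqrt (\<Sum>i<n. (cmod (\<Sum>j<k. X i j * v j))\<^sup>2) \<le> sqrt (frok n k X)"
proof -
  have "(cmod (\<Sum>j<k. X i j * v j))\<^sup>2 \<le> (\<Sum>j<k. (cmod (X i j))\<^sup>2)" for i
  proof -
    have "(\<Sum>j<k. X i j * v j) = ip k (\<lambda>j. cnj (X i j)) v" by (simp add: ip_def)
    hence "(cmod (\<Sum>j<k. X i j * v j))\<^sup>2 \<le> nsq k (\<lambda>j. cnj (X i j)) * nsq k v" using cmod_ip_sq by metis
    also have "\<dots> \<le> nsq k (\<lambda>j. cnj (X i j)) * 1"
      using assms by (intro mult_left_mono) (simp_all add: nsq_def sum_nonneg)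
    finally show ?thesis by (simp add: nsq_def)
  qed
  hence "(\<Sum>i<n. (cmod (\<Sum>j<k. X i j * v j))\<^sup>2) \<le> frok n k X"
    unfolding frok_def by (intro sum_mono) auto
  thus ?thesis by (rule real_sqrt_le_mono)
qed

lemma opnorm_bounds: "0 \<le> opnorm n k X \<and> opnorm n k X \<le> sqrt (frok n k X)"
proof -
  let ?S = "{sqrt (\<Sum>i<n. (cmod (\<Sum>j<k. X i j * v j))\<^sup>2) | v. (\<Sum>j<k. (cmod (v j))\<^sup>2) \<le> 1}"
  have ub: "\<And>x. x \<in> ?S \<Longrightarrow> x \<le> sqrt (frok n k X)" using opnorm_elem_le by blast
  have "\<exists>v. (0::real) = sqrt (\<Sum>i<n. (cmod (\<Sum>j<k. X i j * v j))\<^sup>2) \<and> (\<Sum>j<k. (cmod (v j))\<^sup>2) \<le> 1"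
    by (rule exI[of _ "\<lambda>_. 0"]) simp
  hence z: "0 \<in> ?S" by blast
  hence ne: "?S \<noteq> {}" by blast
  have "0 \<le> Sup ?S" by (rule cSup_upper[OF z bdd_aboveI[OF ub]])
  moreover have "Sup ?S \<le> sqrt (frok n k X)" by (rule cSup_least[OF ne ub])
  ultimately show ?thesis by (simp add: opnorm_def)
qed

lemma frok_fro: "frok n n S = fro n S" by (simp add: frok_def fro_def)

lemma fro_herm_trace:
  assumes h: "herm n S"
  shows "fro n S = (\<Sum>j<n. Re (cmmul n S S j j))"
proof -
  have "Re (cmmul n S S j j) = (\<Sum>p<n. (cmod (S j p))\<^sup>2)" if j: "j < n" for j
  proof -
    have "cmmul n S S j j = (\<Sum>p<n. S j p * cnj (S j p))"
      unfolding cmmul_in[OF j j] by (intro sum.cong refl) (metis hermD h j lessThan_iff)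
    also have "\<dots> = complex_of_real (\<Sum>p<n. (cmod (S j p))\<^sup>2)"
      by (simp only: of_real_sum complex_norm_square)
    finally show ?thesis by simp
  qed
  thus ?thesis unfolding fro_def by (intro sum.cong refl) simp
qed

lemma inv_qf_upper:
  assumes hY: "herm n Y" and YZ: "cmmul n Y Z = cid n" and m: "0 < m"
    and lowY: "\<And>w. m * nsq n w \<le> qf n Y w"
  shows "qf n Z v \<le> nsq n v / m"
proof -
  define w where "w = mv n Z v"
  have vw: "\<And>i. i < n \<Longrightarrow> mv n Y w i = v i" unfolding w_def by (rule mv_inv[OF YZ])
  have "ip n v (mv n Z v) = ip n (mv n Y w) w"
    by (rule ip_cong) (simp_all add: vw[symmetric] w_def)
  also have "\<dots> = ip n w (mv n Y w)" by (rule herm_ip[OF hY, symmetric])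
  finally have qZ: "qf n Z v = qf n Y w" by (simp add: qf_def)
  have nv: "nsq n (mv n Y w) = nsq n v" by (rule nsq_cong) (simp add: vw)
  have "cmod (ip n w (mv n Y w)) \<le> sqrt (nsq n w) * sqrt (nsq n v)"
    using cmod_ip_le[of n w "mv n Y w"] nv by simp
  hence c: "qf n Y w \<le> sqrt (nsq n w) * sqrt (nsq n v)"
    using abs_Re_le_cmod[of "ip n w (mv n Y w)"] unfolding qf_def by linarith
  have sw: "m * sqrt (nsq n w) \<le> sqrt (nsq n v)"
  proof (cases "nsq n w = 0")
    case True thus ?thesis by (simp add: nsq_nonneg)
  next
    case False
    hence pos: "0 < sqrt (nsq n w)" using nsq_nonneg[of n w] by simp
    have "m * (sqrt (nsq n w) * sqrt (nsq n w)) \<le> sqrt (nsq n w) * sqrt (nsq n v)"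
      using lowY[of w] c nsq_nonneg[of n w] by simp
    hence "sqrt (nsq n w) * (m * sqrt (nsq n w)) \<le> sqrt (nsq n w) * sqrt (nsq n v)" by (simp add: mult_ac)
    thus ?thesis using pos by simp
  qed
  have "qf n Y w \<le> sqrt (nsq n w) * sqrt (nsq n v)" by (rule c)
  also have "\<dots> \<le> (sqrt (nsq n v) / m) * sqrt (nsq n v)"
    using sw m by (intro mult_right_mono) (simp_all add: field_simps nsq_nonneg)
  also have "\<dots> = nsq n v / m" using nsq_nonneg[of n v] by simp
  finally show ?thesis by (simp add: qZ)
qed

lemma inv_diag_le:
  assumes hY: "herm n Y" and YZ: "cmmul n Y Z = cid n" and m: "0 < m"
    and lowY: "\<And>w. m * nsq n w \<le> qf n Y w" and j: "j < n"
  shows "Re (Z j j) \<le> 1 / m"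
proof -
  define e where "e = (\<lambda>p::nat. if p = j then (1::complex) else 0)"
  have "nsq n e = (\<Sum>p<n. if p = j then 1 else 0)"
    unfolding nsq_def e_def by (rule sum.cong) auto
  hence e1: "nsq n e = 1" using j by simp
  have "mv n Z e j = (\<Sum>p<n. if p = j then Z j p else 0)"
    unfolding mv_def e_def by (rule sum.cong) auto
  hence "mv n Z e j = Z j j" using j by simp
  moreover have "ip n e (mv n Z e) = (\<Sum>p<n. if p = j then mv n Z e p else 0)"
    unfolding ip_def e_def by (rule sum.cong) auto
  ultimately have "ip n e (mv n Z e) = Z j j" using j by simp
  hence "qf n Z e = Re (Z j j)" by (simp add: qf_def)
  thus ?thesis using inv_qf_upper[OF hY YZ m lowY, of e] e1 by simp
qed

lemma nsq_mv_msc: "nsq n (mv n (msc c A) v) = (cmod c)\<^sup>2 * nsq n (mv n A v)"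
proof -
  have "mv n (msc c A) v = (\<lambda>i. c * mv n A v i)"
    by (simp add: mv_def msc_def sum_distrib_left mult.assoc)
  thus ?thesis by (simp add: nsq_def sum_distrib_left norm_mult power_mult_distrib)
qed

lemma shift_pos_inv:
  assumes mX: "mat_on n X" and hX: "herm n X" and t: "sqrt (fro n X) < t"
  shows "pos_inv n (\<lambda>i j. X i j + complex_of_real t * cid n i j)"
    and "\<And>w. (t - sqrt (fro n X)) * nsq n w \<le> qf n (\<lambda>i j. X i j + complex_of_real t * cid n i j) w"
proof -
  let ?Y = "\<lambda>i j. X i j + complex_of_real t * cid n i j"
  have t0: "0 < t" using t by (meson le_less_trans real_sqrt_ge_zero fro_nonneg)
  show low: "(t - sqrt (fro n X)) * nsq n w \<le> qf n ?Y w" for w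
    using qf_lower[of n X w] by (simp add: qf_lin qf_cid algebra_simps)
  have mY: "mat_on n ?Y" using mX by (simp add: mat_on_def cid_in)
  have hY: "herm n ?Y" unfolding herm_def
    by (intro allI impI) (metis hermD[OF hX] hermD[OF herm_cid] complex_cnj_add complex_cnj_complex_of_real complex_cnj_mult)
  have psd: "0 \<le> qf n ?Y w" for w
    using low[of w] t nsq_nonneg[of n w] by (smt (verit) mult_nonneg_nonneg)
  define H where "H = msc (complex_of_real (- 1 / t)) X"
  define q where "q = sqrt (fro n X) / t"
  have mH: "mat_on n H" using mX by (simp add: H_def)
  have bH: "bnd n H q" unfolding bnd_def
  proof (intro conjI allI)
    show "0 \<le> q" using t0 by (simp add: q_def fro_nonneg)
    show "q < 1" using t t0 by (simp add: q_def)
    fix v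
    have "nsq n (mv n H v) = (1 / t)\<^sup>2 * nsq n (mv n X v)"
      by (simp add: H_def nsq_mv_msc power_divide norm_divide)
    also have "\<dots> \<le> (1 / t)\<^sup>2 * (fro n X * nsq n v)" by (intro mult_left_mono nsq_mv_le) simp
    also have "\<dots> = q\<^sup>2 * nsq n v" by (simp add: q_def power_divide fro_nonneg)
    finally show "nsq n (mv n H v) \<le> q\<^sup>2 * nsq n v" .
  qed
  have Yeq: "?Y = msc (complex_of_real t) (fser n 1 H)"
    unfolding fser_1[OF mH] using t0 mX
    by (auto simp: fun_eq_iff msc_def H_def cid_in mat_on_def algebra_simps)
  define Zt where "Zt = msc (complex_of_real (1 / t)) (fser n (-1) H)"
  have "cmmul n ?Y Zt = cid n"
    unfolding Yeq Zt_def cmmul_msc fser_mult[OF bH] using t0 by (simp add: fser_0 msc_def)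
  moreover have "cmmul n Zt ?Y = cid n"
    unfolding Yeq Zt_def cmmul_msc fser_mult[OF bH] using t0 by (simp add: fser_0 msc_def)
  moreover have "mat_on n Zt" by (simp add: Zt_def)
  ultimately show "pos_inv n ?Y" unfolding pos_inv_iff using mY hY psd by blast
qed



definition tens :: "(complex \<Rightarrow> 'w::ab_group_add \<Rightarrow> 'w) \<Rightarrow> nat \<Rightarrow> (nat \<Rightarrow> nat \<Rightarrow> complex) \<Rightarrow> 'w \<Rightarrow> nat \<Rightarrow> nat \<Rightarrow> 'w" where
  "tens smul n M e = (\<lambda>i j. if i < n \<and> j < n then smul (M i j) e else 0)"

lemma sconj_in: "i < k \<Longrightarrow> j < k \<Longrightarrow> sconj smul n k X A i j = (\<Sum>p<n. \<Sum>q<n. smul (cnj (X p i) * X q j) (A p q))"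
  by (simp add: sconj_def)
lemma sconj_out: "\<not> (i < k \<and> j < k) \<Longrightarrow> sconj smul n k X A i j = 0"
  unfolding sconj_def by auto

lemma mat_on_sconj: "mat_on k (sconj smul n k X A)"
  unfolding mat_on_def by (intro allI impI) (rule sconj_out)

context
  fixes smul :: "complex \<Rightarrow> 'w::ab_group_add \<Rightarrow> 'w"
  assumes ms: "module smul"
begin

lemma sconj_madd: "sconj smul n n R (madd A B) = madd (sconj smul n n R A) (sconj smul n n R B)"
  by (auto simp: fun_eq_iff sconj_def madd_def module.scale_right_distrib[OF ms] sum.distrib)

lemma sconj_mneg: "sconj smul n n R (mneg A) = mneg (sconj smul n n R A)"
  by (auto simp: fun_eq_iff sconj_def mneg_def module.scale_minus_right[OF ms] sum_negf)

lemma sconj_comp: "sconj smul n n R (sconj smul n n S M) = sconj smul n n (cmmul n S R) M"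
proof (intro ext)
  fix i j
  show "sconj smul n n R (sconj smul n n S M) i j = sconj smul n n (cmmul n S R) M i j"
  proof (cases "i < n \<and> j < n")
    case False thus ?thesis by (simp add: sconj_out)
  next
    case True
    hence i: "i < n" and j: "j < n" by auto
    let ?f = "\<lambda>p q a b. smul (cnj (R p i) * R q j * (cnj (S a p) * S b q)) (M a b)"
    have "sconj smul n n R (sconj smul n n S M) i j = (\<Sum>p<n. \<Sum>q<n. \<Sum>a<n. \<Sum>b<n. ?f p q a b)"
      unfolding sconj_in[OF i j]
      by (intro sum.cong refl) (simp add: sconj_in module.scale_sum_right[OF ms] module.scale_scale[OF ms])
    also have "\<dots> = (\<Sum>p<n. \<Sum>a<n. \<Sum>q<n. \<Sum>b<n. ?f p q a b)"
      by (intro sum.cong refl sum.swap)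
    also have "\<dots> = (\<Sum>a<n. \<Sum>p<n. \<Sum>q<n. \<Sum>b<n. ?f p q a b)" by (rule sum.swap)
    also have "\<dots> = (\<Sum>a<n. \<Sum>p<n. \<Sum>b<n. \<Sum>q<n. ?f p q a b)"
      by (intro sum.cong refl sum.swap)
    also have "\<dots> = (\<Sum>a<n. \<Sum>b<n. \<Sum>p<n. \<Sum>q<n. ?f p q a b)"
      by (intro sum.cong refl sum.swap)
    also have "\<dots> = (\<Sum>a<n. \<Sum>b<n. smul (\<Sum>p<n. \<Sum>q<n. cnj (R p i) * R q j * (cnj (S a p) * S b q)) (M a b))"
      by (simp add: module.scale_sum_left[OF ms])
    also have "\<dots> = (\<Sum>a<n. \<Sum>b<n. smul (cnj (cmmul n S R a i) * cmmul n S R b j) (M a b))"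
    proof (intro sum.cong refl)
      fix a b assume a: "a \<in> {..<n}" and b: "b \<in> {..<n}"
      have "(\<Sum>p<n. \<Sum>q<n. cnj (R p i) * R q j * (cnj (S a p) * S b q))
          = (\<Sum>p<n. cnj (S a p * R p i)) * (\<Sum>q<n. S b q * R q j)"
        by (simp add: sum_product mult_ac) (rule sum.swap)
      also have "\<dots> = cnj (cmmul n S R a i) * cmmul n S R b j"
        using a b i j by (simp add: cmmul_in cnj_sum)
      finally show "smul (\<Sum>p<n. \<Sum>q<n. cnj (R p i) * R q j * (cnj (S a p) * S b q)) (M a b)
          = smul (cnj (cmmul n S R a i) * cmmul n S R b j) (M a b)" by simp
    qed
    also have "\<dots> = sconj smul n n (cmmul n S R) M i j" by (simp add: sconj_in i j)
    finally show ?thesis .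
  qed
qed

lemma sconj_cid: "mat_on n M \<Longrightarrow> sconj smul n n (cid n) M = M"
proof (intro ext)
  fix i j assume m: "mat_on n M"
  show "sconj smul n n (cid n) M i j = M i j"
  proof (cases "i < n \<and> j < n")
    case True
    hence i: "i < n" and j: "j < n" by auto
    have t: "smul (cnj (cid n p i) * cid n q j) (M p q) = (if p = i then (if q = j then M p q else 0) else 0)"
      if "p < n" "q < n" for p q
      using that i j by (auto simp: cid_in module.scale_zero_left[OF ms] module.scale_one[OF ms])
    have "sconj smul n n (cid n) M i j = (\<Sum>p<n. \<Sum>q<n. if p = i then (if q = j then M p q else 0) else 0)"
      unfolding sconj_in[OF i j] by (intro sum.cong refl) (simp add: t)
    also have "\<dots> = (\<Sum>p<n. if p = i then M p j else 0)"
      by (intro sum.cong refl) (simp add: j)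
    also have "\<dots> = M i j" using i by simp
    finally show ?thesis .
  next
    case False
    thus ?thesis using m by (auto simp: sconj_out mat_on_def)
  qed
qed

lemma sconj_tens: "sconj smul n n R (tens smul n M e) = tens smul n (cmmul n (madj R) (cmmul n M R)) e"
proof (intro ext)
  fix i j
  show "sconj smul n n R (tens smul n M e) i j = tens smul n (cmmul n (madj R) (cmmul n M R)) e i j"
  proof (cases "i < n \<and> j < n")
    case True
    hence i: "i < n" and j: "j < n" by auto
    have "sconj smul n n R (tens smul n M e) i j = (\<Sum>p<n. \<Sum>q<n. smul (cnj (R p i) * R q j * M p q) e)"
      unfolding sconj_in[OF i j] by (intro sum.cong refl) (simp add: tens_def module.scale_scale[OF ms])
    also have "\<dots> = smul (\<Sum>p<n. \<Sum>q<n. cnj (R p i) * R q j * M p q) e"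
      by (simp add: module.scale_sum_left[OF ms])
    also have "(\<Sum>p<n. \<Sum>q<n. cnj (R p i) * R q j * M p q) = cmmul n (madj R) (cmmul n M R) i j"
      using i j by (auto simp: cmmul_in madj_def sum_distrib_left mult_ac intro!: sum.cong)
    finally show ?thesis using i j by (simp add: tens_def)
  next
    case False thus ?thesis by (auto simp: sconj_out tens_def)
  qed
qed

lemma idt_tens: "idt n (smul c e) = tens smul n (msc c (cid n)) e"
  by (auto simp: fun_eq_iff idt_def tens_def msc_def cid_in module.scale_zero_left[OF ms])

end



lemma ss_module: "star_space smul st \<Longrightarrow> module smul"
  by (simp add: star_space_def module_iff_vector_space)

lemma ss_additive: "star_space smul st \<Longrightarrow> Modules.additive st"
  unfolding star_space_def by (simp add: Modules.additive_def)

lemma ss_scale: "star_space smul st \<Longrightarrow> st (smul c x) = smul (cnj c) (st x)"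
  unfolding star_space_def by blast
lemma ss_invol: "star_space smul st \<Longrightarrow> st (st x) = x"
  unfolding star_space_def by blast

lemma msaD: "A \<in> msa st n \<Longrightarrow> i < n \<Longrightarrow> j < n \<Longrightarrow> A i j = st (A j i)"
  unfolding msa_def by blast
lemma msa_mat_on: "A \<in> msa st n \<Longrightarrow> mat_on n A"
  unfolding msa_def by blast

lemma sconj_msa:
  assumes ss: "star_space smul st" and A: "A \<in> msa st n"
  shows "sconj smul n n S A \<in> msa st n"
  unfolding msa_def
proof (intro CollectI conjI allI impI)
  show "mat_on n (sconj smul n n S A)" by (rule mat_on_sconj)
  fix i j assume i: "i < n" and j: "j < n"
  have "st (sconj smul n n S A j i) = (\<Sum>p<n. \<Sum>q<n. smul (S p j * cnj (S q i)) (st (A p q)))"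
    by (simp add: sconj_in i j Modules.additive.sum[OF ss_additive[OF ss]] ss_scale[OF ss])
  also have "\<dots> = (\<Sum>p<n. \<Sum>q<n. smul (S p j * cnj (S q i)) (A q p))"
    by (intro sum.cong refl) (metis A lessThan_iff msaD ss ss_invol)
  also have "\<dots> = (\<Sum>q<n. \<Sum>p<n. smul (S p j * cnj (S q i)) (A q p))" by (rule sum.swap)
  also have "\<dots> = sconj smul n n S A i j" by (simp add: sconj_in i j mult.commute)
  finally show "sconj smul n n S A i j = st (sconj smul n n S A j i)" by simp
qed

lemma mneg_msa:
  fixes A :: "nat \<Rightarrow> nat \<Rightarrow> 'a::ab_group_add"
  assumes ss: "star_space smul st" and A: "A \<in> msa st n"
  shows "mneg A \<in> msa st n"
  unfolding msa_def
proof (intro CollectI conjI allI impI)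
  show "mat_on n (mneg A)" using msa_mat_on[OF A] by (simp add: mat_on_def mneg_def)
  fix i j assume "i < n" "j < n"
  thus "mneg A i j = st (mneg A j i)"
    unfolding mneg_def using msaD[OF A] Modules.additive.minus[OF ss_additive[OF ss]] by metis
qed

lemma mapn_msa:
  assumes lin: "\<And>x. f (- x) = - f x" and comm: "\<And>x. f (st1 x) = st2 (f x)" and A: "A \<in> msa st1 n"
  shows "mapn n f A \<in> msa st2 n"
  unfolding msa_def
proof (intro CollectI conjI allI impI)
  show "mat_on n (mapn n f A)" by (simp add: mat_on_def mapn_def)
  fix i j assume "i < n" "j < n"
  thus "mapn n f A i j = st2 (mapn n f A j i)"
    unfolding mapn_def using msaD[OF A] comm by metis
qed

lemma idt_msa: "st e = e \<Longrightarrow> star_space smul st \<Longrightarrow> idt n e \<in> msa st n"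
  unfolding msa_def mat_on_def idt_def by (simp add: Modules.additive.zero[OF ss_additive])

lemma mapn_mneg:
  fixes f :: "'a::ab_group_add \<Rightarrow> 'b::ab_group_add"
  shows "(\<And>x. f (- x) = - f x) \<Longrightarrow> mapn n f (mneg A) = mneg (mapn n f A)"
  by (auto simp: fun_eq_iff mapn_def mneg_def)

lemma mapn_sconj:
  assumes add: "\<And>x y. f (x + y) = f x + f y" and sc: "\<And>c x. f (s1 c x) = s2 c (f x)"
  shows "mapn n f (sconj s1 n n S M) = sconj s2 n n S (mapn n f M)"
proof -
  have ad: "Modules.additive f" by (simp add: Modules.additive_def add)
  show ?thesis
    by (auto simp: fun_eq_iff mapn_def sconj_def Modules.additive.sum[OF ad] sc intro!: sum.cong)
qed

lemma mat_on_mapn: "mat_on n (mapn n f A)" by (simp add: mat_on_def mapn_def)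
lemma mat_on_mneg:
  fixes A :: "nat \<Rightarrow> nat \<Rightarrow> 'a::ab_group_add"
  shows "mat_on n A \<Longrightarrow> mat_on n (mneg A)" by (simp add: mat_on_def mneg_def)

lemma os_facts:
  assumes "operator_system smul st P e"
  shows "star_space smul st" "st e = e"
    "\<And>n A B. 0 < n \<Longrightarrow> A \<in> P n \<Longrightarrow> B \<in> P n \<Longrightarrow> madd A B \<in> P n"
    "\<And>n A t. 0 < n \<Longrightarrow> A \<in> P n \<Longrightarrow> 0 \<le> t \<Longrightarrow> mscale smul (complex_of_real t) A \<in> P n"
    "\<And>n k X B. 0 < n \<Longrightarrow> 0 < k \<Longrightarrow> B \<in> P n \<Longrightarrow> sconj smul n k X B \<in> P k"
    "\<And>n A. 0 < n \<Longrightarrow> A \<in> msa st n \<Longrightarrow> \<exists>t. 0 < t \<and> madd (idt n (smul (complex_of_real t) e)) (mneg A) \<in> P n"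
    "\<And>n A. 0 < n \<Longrightarrow> A \<in> msa st n \<Longrightarrow> (\<And>\<epsilon>. 0 < \<epsilon> \<Longrightarrow> madd (idt n (smul (complex_of_real \<epsilon>) e)) A \<in> P n) \<Longrightarrow> A \<in> P n"
proof -
  note d = assms[unfolded operator_system_def]
  note c1 = d[THEN conjunct1]
  note c2 = d[THEN conjunct2, THEN conjunct1]
  note c4 = d[THEN conjunct2, THEN conjunct2, THEN conjunct2, THEN conjunct1]
  note c5 = d[THEN conjunct2, THEN conjunct2, THEN conjunct2, THEN conjunct2, THEN conjunct1]
  note c8 = d[THEN conjunct2, THEN conjunct2, THEN conjunct2, THEN conjunct2, THEN conjunct2, THEN conjunct2, THEN conjunct2, THEN conjunct1]
  note c9 = d[THEN conjunct2, THEN conjunct2, THEN conjunct2, THEN conjunct2, THEN conjunct2, THEN conjunct2, THEN conjunct2, THEN conjunct2, THEN conjunct1]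
  note c10 = d[THEN conjunct2, THEN conjunct2, THEN conjunct2, THEN conjunct2, THEN conjunct2, THEN conjunct2, THEN conjunct2, THEN conjunct2, THEN conjunct2]
  show "star_space smul st" by (rule c1)
  show "st e = e" by (rule c2)
  show "\<And>n A B. 0 < n \<Longrightarrow> A \<in> P n \<Longrightarrow> B \<in> P n \<Longrightarrow> madd A B \<in> P n" using c4 by blast
  show "\<And>n A t. 0 < n \<Longrightarrow> A \<in> P n \<Longrightarrow> 0 \<le> t \<Longrightarrow> mscale smul (complex_of_real t) A \<in> P n" using c5 by blast
  show "\<And>n k X B. 0 < n \<Longrightarrow> 0 < k \<Longrightarrow> B \<in> P n \<Longrightarrow> sconj smul n k X B \<in> P k" using c8 by blast
  show "\<And>n A. 0 < n \<Longrightarrow> A \<in> msa st n \<Longrightarrow> \<exists>t. 0 < t \<and> madd (idt n (smul (complex_of_real t) e)) (mneg A) \<in> P n"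
    using c9 by blast
  fix n A assume n: "0 < n" and A: "A \<in> msa st n"
    and h: "\<And>\<epsilon>. 0 < \<epsilon> \<Longrightarrow> madd (idt n (smul (complex_of_real \<epsilon>) e)) A \<in> P n"
  have "\<forall>\<epsilon>::real. 0 < \<epsilon> \<longrightarrow> madd (idt n (smul (complex_of_real \<epsilon>) e)) A \<in> P n" using h by blast
  thus "A \<in> P n" using c10 n A by blast
qed

lemma idt_in_P:
  assumes os: "operator_system smul st P e" and n: "0 < n"
  shows "idt n e \<in> P n"
proof -
  note f = os_facts[OF os]
  have ms: "module smul" by (rule ss_module[OF f(1)])
  have "mneg (idt n e) \<in> msa st n" by (rule mneg_msa[OF f(1) idt_msa[OF f(2) f(1)]])
  from f(6)[OF n this] obtain t where t: "0 < t"
    and P1: "madd (idt n (smul (complex_of_real t) e)) (mneg (mneg (idt n e))) \<in> P n" by blast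
  have eq: "madd (idt n (smul (complex_of_real t) e)) (mneg (mneg (idt n e))) = idt n (smul (complex_of_real (t + 1)) e)"
    by (auto simp: fun_eq_iff madd_def mneg_def idt_def module.scale_left_distrib[OF ms] module.scale_one[OF ms])
  have "mscale smul (complex_of_real (1 / (t + 1))) (idt n (smul (complex_of_real (t + 1)) e)) \<in> P n"
    using P1 eq t by (intro f(4)[OF n]) auto
  moreover have "mscale smul (complex_of_real (1 / (t + 1))) (idt n (smul (complex_of_real (t + 1)) e)) = idt n e"
  proof -
    have tc: "complex_of_real t + 1 \<noteq> 0"
      by (metis add_pos_pos less_irrefl of_real_1 of_real_add of_real_eq_0_iff t zero_less_one)
    thus ?thesis
      by (auto simp: fun_eq_iff mscale_def idt_def module.scale_scale[OF ms] module.scale_zero_right[OF ms]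
          module.scale_one[OF ms])
  qed
  ultimately show ?thesis by simp
qed

lemma tens_sq_in_P:
  assumes os: "operator_system smul st P e" and n: "0 < n" and mR: "mat_on n R" and hR: "herm n R"
  shows "tens smul n (cmmul n R R) e \<in> P n"
proof -
  note f = os_facts[OF os]
  have ms: "module smul" by (rule ss_module[OF f(1)])
  have "sconj smul n n R (idt n e) \<in> P n" by (rule f(5)[OF n n idt_in_P[OF os n]])
  moreover have "idt n e = idt n (smul 1 e)" by (simp add: module.scale_one[OF ms])
  moreover have "msc 1 (cid n) = cid n" by (simp add: msc_def)
  ultimately show ?thesis
    by (simp add: idt_tens[OF ms] sconj_tens[OF ms] cmmul_cid_left mR herm_madj[OF mR hR])
qed

lemma tens_pos_in_P:
  assumes os: "operator_system smul st P e" and n: "0 < n" and mH: "mat_on n H" and hH: "herm n H"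
    and b: "bnd n H q" and a: "0 \<le> a"
  shows "tens smul n (msc (complex_of_real a) (fser n 1 H)) e \<in> P n"
proof -
  define R where "R = msc (complex_of_real (sqrt a)) (fser n (1/2) H)"
  have "cmmul n R R = msc (complex_of_real a) (fser n 1 H)"
    using a by (simp add: R_def cmmul_msc fser_mult[OF b] flip: of_real_mult)
  moreover have "tens smul n (cmmul n R R) e \<in> P n"
    by (rule tens_sq_in_P[OF os n]) (simp_all add: R_def herm_msc fser_herm[OF b hH mH])
  ultimately show ?thesis by simp
qed

lemma order_gauge_lt:
  assumes os: "operator_system smul st P e" and n: "0 < n" and B: "B \<in> msa st n"
    and lt: "order_gauge smul P e n B < s"
  shows "madd (idt n (smul (complex_of_real s) e)) (mneg B) \<in> P n"
proof -
  note f = os_facts[OF os]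
  have ms: "module smul" by (rule ss_module[OF f(1)])
  let ?G = "{t::real. 0 < t \<and> madd (idt n (smul (complex_of_real t) e)) (mneg B) \<in> P n}"
  have ne: "?G \<noteq> {}" using f(6)[OF n B] by blast
  have bb: "bdd_below ?G" by (rule bdd_belowI[of _ 0]) auto
  from lt obtain s' where s': "s' \<in> ?G" "s' < s"
    unfolding order_gauge_def using cInf_less_iff[OF ne bb] by blast
  have "mscale smul (complex_of_real (s - s')) (idt n e) \<in> P n"
    using s' by (intro f(4)[OF n idt_in_P[OF os n]]) auto
  moreover have "madd (idt n (smul (complex_of_real s') e)) (mneg B) \<in> P n" using s'(1) by blast
  ultimately have "madd (madd (idt n (smul (complex_of_real s') e)) (mneg B)) (mscale smul (complex_of_real (s - s')) (idt n e)) \<in> P n"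
    using f(3)[OF n] by blast
  moreover have "madd (madd (idt n (smul (complex_of_real s') e)) (mneg B)) (mscale smul (complex_of_real (s - s')) (idt n e))
      = madd (idt n (smul (complex_of_real s) e)) (mneg B)"
  proof -
    have "smul (complex_of_real s') e + x + smul (complex_of_real (s - s')) e = smul (complex_of_real s) e + x" for x
    proof -
      have "smul (complex_of_real s') e + smul (complex_of_real (s - s')) e = smul (complex_of_real s) e"
        by (simp add: module.scale_left_distrib[OF ms, symmetric] flip: of_real_add)
      thus ?thesis by (simp add: algebra_simps)
    qed
    thus ?thesis by (auto simp: fun_eq_iff madd_def mscale_def idt_def module.scale_zero_right[OF ms])
  qed
  ultimately show ?thesis by simp
qed



lemma inv_sqrt_facts:
  assumes pY: "pos_inv n Y"
  shows "mat_on n (inv_sqrt n Y)" "herm n (inv_sqrt n Y)"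
    "cmmul n (inv_sqrt n Y) (cmmul n (inv_sqrt n Y) Y) = cid n"
    "cmmul n (madj (cmmul n (inv_sqrt n Y) Y)) (cmmul n (inv_sqrt n Y) Y) = Y"
    "cmmul n Y (cmmul n (inv_sqrt n Y) (inv_sqrt n Y)) = cid n"
proof -
  let ?S = "inv_sqrt n Y"
  have p: "mat_on n ?S" "pos_inv n ?S" "cmmul n (cmmul n ?S ?S) Y = cid n"
    using inv_sqrt_props[OF pY] by blast+
  from pY obtain Z where mY: "mat_on n Y" and hY: "herm n Y" and mZ: "mat_on n Z"
    and YZ: "cmmul n Y Z = cid n" and ZY: "cmmul n Z Y = cid n"
    unfolding pos_inv_iff by blast
  show "mat_on n ?S" by (rule p(1))
  show hS: "herm n ?S" using p(2) unfolding pos_inv_iff by blast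
  show "cmmul n ?S (cmmul n ?S Y) = cid n" using p(3) by (simp add: cmmul_assoc)
  have SSZ: "cmmul n ?S ?S = Z"
  proof -
    have "cmmul n ?S ?S = cmmul n (cmmul n ?S ?S) (cmmul n Y Z)" by (simp add: YZ cmmul_cid_right)
    also have "\<dots> = Z" by (simp add: cmmul_assoc[symmetric] p(3) cmmul_cid_left mZ)
    finally show ?thesis .
  qed
  show "cmmul n Y (cmmul n ?S ?S) = cid n" by (simp add: SSZ YZ)
  have "madj (cmmul n ?S Y) = cmmul n Y ?S"
    by (simp add: madj_cmmul herm_madj[OF mY hY] herm_madj[OF p(1) hS])
  hence "cmmul n (madj (cmmul n ?S Y)) (cmmul n ?S Y) = cmmul n Y (cmmul n ?S (cmmul n ?S Y))"
    by (simp add: cmmul_assoc)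
  also have "\<dots> = Y" using p(3) mY by (simp add: cmmul_assoc cmmul_cid_right)
  finally show "cmmul n (madj (cmmul n ?S Y)) (cmmul n ?S Y) = Y" .
qed

lemma fro_inv_sqrt:
  assumes pY: "pos_inv n Y" and m: "0 < m" and low: "\<And>w. m * nsq n w \<le> qf n Y w"
  shows "fro n (inv_sqrt n Y) \<le> real n / m"
proof -
  let ?S = "inv_sqrt n Y"
  have hY: "herm n Y" using pY unfolding pos_inv_iff by blast
  have "fro n ?S = (\<Sum>j<n. Re (cmmul n ?S ?S j j))" by (rule fro_herm_trace[OF inv_sqrt_facts(2)[OF pY]])
  also have "\<dots> \<le> (\<Sum>j<n. 1 / m)"
    by (intro sum_mono inv_diag_le[OF hY inv_sqrt_facts(5)[OF pY] m low]) auto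
  also have "\<dots> = real n / m" by simp
  finally show ?thesis .
qed

lemma shiftm_eq: "mat_on n X \<Longrightarrow> shiftm n t (mneg X) = (\<lambda>i j. X i j + complex_of_real t * cid n i j)"
  by (auto simp: fun_eq_iff shiftm_def mneg_def cid_in mat_on_def)



theorem lemma3p12:
  fixes smulV :: "complex \<Rightarrow> 'v::ab_group_add \<Rightarrow> 'v" and stV :: "'v \<Rightarrow> 'v"
    and \<nu> :: "nat \<Rightarrow> (nat \<Rightarrow> nat \<Rightarrow> 'v) \<Rightarrow> real"
    and smulW :: "complex \<Rightarrow> 'w::ab_group_add \<Rightarrow> 'w" and stW :: "'w \<Rightarrow> 'w"
    and P :: "nat \<Rightarrow> (nat \<Rightarrow> nat \<Rightarrow> 'w) set" and e :: 'w
    and \<phi> :: "'v \<Rightarrow> 'w"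
  assumes "Linf_MOS smulV stV \<nu>"
    and "operator_system smulW stW P e"
    and "completely_gauge_contractive smulV stV \<nu> smulW stW (order_gauge smulW P e) \<phi>"
  shows "completely_positive_unital_ext smulV stV \<nu> smulW P e \<phi>"
proof -
  note L = assms(1)[unfolded Linf_MOS_def]
  have ssV: "star_space smulV stV" by (rule L[THEN conjunct1])
  have pg: "\<And>n. 0 < n \<Longrightarrow> proper_gauge smulV stV n (\<nu> n)" using L[THEN conjunct2, THEN conjunct1] by blast
  have cj: "\<And>n k X A. 0 < n \<Longrightarrow> 0 < k \<Longrightarrow> A \<in> msa stV n \<Longrightarrow> \<nu> k (sconj smulV n k X A) \<le> (opnorm n k X)\<^sup>2 * \<nu> n A"
    using L[THEN conjunct2, THEN conjunct2, THEN conjunct1] by blast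
  note f = os_facts[OF assms(2)]
  have ssW: "star_space smulW stW" by (rule f(1))
  have msW: "module smulW" by (rule ss_module[OF ssW])
  note C = assms(3)[unfolded completely_gauge_contractive_def]
  have lin: "Vector_Spaces.linear smulV smulW \<phi>" by (rule C[THEN conjunct1])
  have phst: "\<And>x. \<phi> (stV x) = stW (\<phi> x)" using C[THEN conjunct2, THEN conjunct1] by blast
  have gc: "\<And>n A. 0 < n \<Longrightarrow> A \<in> msa stV n \<Longrightarrow> order_gauge smulW P e n (mapn n \<phi> A) \<le> \<nu> n A"
    using C[THEN conjunct2, THEN conjunct2] by blast
  have mh: "module_hom smulV smulW \<phi>" using lin by (simp add: module_hom_iff_linear)
  have padd: "\<And>x y. \<phi> (x + y) = \<phi> x + \<phi> y" by (rule module_hom.add[OF mh])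
  have psc: "\<And>c x. \<phi> (smulV c x) = smulW c (\<phi> x)" by (rule module_hom.scale[OF mh])
  have pneg: "\<And>x. \<phi> (- x) = - \<phi> x" by (rule module_hom.neg[OF mh])
  have stWadd: "\<And>x y. stW (x + y) = stW x + stW y" using ssW unfolding star_space_def by blast
  show ?thesis unfolding completely_positive_unital_ext_def
  proof (intro allI impI ballI)
    fix n :: nat and AX assume n: "0 < n" and AX: "AX \<in> unit_pos smulV stV \<nu> n"
    obtain A X where AXe: "AX = (A, X)" by fastforce
    from AX have A: "A \<in> msa stV n" and Xm: "X \<in> msa cnj n" and u0: "unorm smulV \<nu> n (mneg A) (mneg X) = 0"
      unfolding AXe unit_pos_def by auto
    have mX: "mat_on n X" and hX: "herm n X" using Xm msa_cnj_iff by auto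
    define K where "K = sqrt (fro n X)"
    have K0: "0 \<le> K" by (simp add: K_def fro_nonneg)
    define Y where "Y = (\<lambda>t::real. \<lambda>i j. X i j + complex_of_real t * cid n i j)"
    have shY: "\<And>t. shiftm n t (mneg X) = Y t" unfolding Y_def by (rule shiftm_eq[OF mX])
    define T where "T = {t::real. 0 < t \<and> pos_inv n (Y t) \<and> \<nu> n (sconj smulV n n (inv_sqrt n (Y t)) (mneg A)) \<le> 1}"
    have InfT: "Inf T = 0" using u0 unfolding unorm_def shY T_def .
    have mA: "mneg A \<in> msa stV n" by (rule mneg_msa[OF ssV A])
    have nu0: "0 \<le> \<nu> n (mneg A)" using pg[OF n] mA unfolding proper_gauge_def by blast
    have shift: "pos_inv n (Y t)" "\<And>w. (t - K) * nsq n w \<le> qf n (Y t) w" if "K < t" for t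
      using shift_pos_inv[OF mX hX, of t] that unfolding Y_def K_def by blast+
    define m0 where "m0 = 1 + real n * \<nu> n (mneg A)"
    have m0: "1 \<le> m0" using nu0 by (simp add: m0_def)
    define t0 where "t0 = K + m0"
    have t0T: "t0 \<in> T"
    proof -
      have Kt: "K < t0" using m0 by (simp add: t0_def)
      let ?S = "inv_sqrt n (Y t0)"
      have fS: "fro n ?S \<le> real n / m0"
        using fro_inv_sqrt[OF shift(1)[OF Kt], of m0] shift(2)[OF Kt] m0 by (simp add: t0_def)
      have ob: "0 \<le> opnorm n n ?S" "opnorm n n ?S \<le> sqrt (fro n ?S)"
        using opnorm_bounds[of n n ?S] by (simp_all add: frok_fro)
      have "(opnorm n n ?S)\<^sup>2 \<le> (sqrt (fro n ?S))\<^sup>2" by (rule power_mono[OF ob(2) ob(1)])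
      hence os: "(opnorm n n ?S)\<^sup>2 \<le> fro n ?S" by (simp add: fro_nonneg)
      have "\<nu> n (sconj smulV n n ?S (mneg A)) \<le> (opnorm n n ?S)\<^sup>2 * \<nu> n (mneg A)" by (rule cj[OF n n mA])
      also have "\<dots> \<le> (real n / m0) * \<nu> n (mneg A)" by (intro mult_right_mono nu0 order_trans[OF os fS])
      also have "\<dots> \<le> 1"
      proof -
        have le: "real n * \<nu> n (mneg A) \<le> m0" by (simp add: m0_def)
        have "(real n / m0) * \<nu> n (mneg A) = (real n * \<nu> n (mneg A)) / m0" by simp
        also have "\<dots> \<le> 1" using le m0 by (simp add: divide_le_eq)
        finally show ?thesis .
      qed
      finally have "\<nu> n (sconj smulV n n ?S (mneg A)) \<le> 1" .
      moreover have "0 < t0" using Kt K0 by simp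
      ultimately show ?thesis using shift(1)[OF Kt] by (simp add: T_def)
    qed
    hence Tne: "T \<noteq> {}" by blast
    have Tbb: "bdd_below T" by (rule bdd_belowI[of _ 0]) (auto simp: T_def)
    have small: "\<exists>t\<in>T. t < \<delta>" if "0 < \<delta>" for \<delta>
      using cInf_less_iff[OF Tne Tbb, of \<delta>] InfT that by simp
    define B where "B = unital_ext_n (+) smulW \<phi> e n (A, X)"
    have Bmsa: "B \<in> msa stW n"
      unfolding msa_def
    proof (intro CollectI conjI allI impI)
      show "mat_on n B" by (simp add: mat_on_def B_def unital_ext_n_def)
      fix i j assume i: "i < n" and j: "j < n"
      have "stW (B j i) = \<phi> (stV (A j i)) + smulW (cnj (X j i)) e"
        using i j by (simp add: B_def unital_ext_n_def stWadd phst ss_scale[OF ssW] f(2))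
      also have "\<dots> = B i j"
        using i j msaD[OF A i j] hermD[OF hX i j] by (simp add: B_def unital_ext_n_def)
      finally show "B i j = stW (B j i)" by simp
    qed
    have "B \<in> P n"
    proof (rule f(7)[OF n Bmsa])
      fix \<epsilon> :: real assume eps: "0 < \<epsilon>"
      define \<eta> where "\<eta> = \<epsilon> / (4 * (K + 1))"
      have eta0: "0 < \<eta>" using eps K0 by (simp add: \<eta>_def)
      have etaK: "\<eta> * K \<le> \<epsilon> / 4"
      proof -
        have "\<eta> * K = (\<epsilon> / 4) * (K / (K + 1))" by (simp add: \<eta>_def field_simps)
        also have "\<dots> \<le> (\<epsilon> / 4) * 1" using K0 eps by (intro mult_left_mono) simp_all
        finally show ?thesis by simp
      qed
      obtain t where tT: "t \<in> T" and tlt: "t < \<epsilon> / (4 * (1 + \<eta>))"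
        using small[of "\<epsilon> / (4 * (1 + \<eta>))"] eps eta0 by auto
      from tT have t0: "0 < t" and pY: "pos_inv n (Y t)"
        and nuC: "\<nu> n (sconj smulV n n (inv_sqrt n (Y t)) (mneg A)) \<le> 1" by (auto simp: T_def)
      have et: "(1 + \<eta>) * t < \<epsilon> / 4" using tlt eta0 by (simp add: field_simps)
      define a where "a = \<epsilon> - (1 + \<eta>) * t"
      have a0: "\<epsilon> / 2 < a" using et eps by (simp add: a_def)
      define S where "S = inv_sqrt n (Y t)"
      define R where "R = cmmul n S (Y t)"
      have mS: "mat_on n S" and SR: "cmmul n S R = cid n" and RR: "cmmul n (madj R) R = Y t"
        using inv_sqrt_facts[OF pY] by (simp_all add: S_def R_def)
      define Cm where "Cm = sconj smulV n n S (mneg A)"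
      have Cmsa: "Cm \<in> msa stV n" unfolding Cm_def by (rule sconj_msa[OF ssV mA])
      have "order_gauge smulW P e n (mapn n \<phi> Cm) < 1 + \<eta>"
        using gc[OF n Cmsa] nuC eta0 by (simp add: Cm_def S_def)
      hence E: "madd (idt n (smulW (complex_of_real (1 + \<eta>)) e)) (mneg (mapn n \<phi> Cm)) \<in> P n"
        by (rule order_gauge_lt[OF assms(2) n mapn_msa[OF pneg phst Cmsa]])
      have RE: "sconj smulW n n R (madd (idt n (smulW (complex_of_real (1 + \<eta>)) e)) (mneg (mapn n \<phi> Cm))) \<in> P n"
        by (rule f(5)[OF n n E])
      have mapC: "mapn n \<phi> Cm = sconj smulW n n S (mneg (mapn n \<phi> A))"
        unfolding Cm_def mapn_sconj[of \<phi> smulV smulW, OF padd psc] mapn_mneg[of \<phi>, OF pneg] ..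
      have mmA: "mat_on n (mneg (mapn n \<phi> A))" by (rule mat_on_mneg[OF mat_on_mapn])
      have RE_eq: "sconj smulW n n R (madd (idt n (smulW (complex_of_real (1 + \<eta>)) e)) (mneg (mapn n \<phi> Cm)))
          = madd (tens smulW n (msc (complex_of_real (1 + \<eta>)) (Y t)) e) (mneg (mneg (mapn n \<phi> A)))"
        unfolding sconj_madd[OF msW] sconj_mneg[OF msW] mapC sconj_comp[OF msW] SR sconj_cid[OF msW mmA]
          idt_tens[OF msW] sconj_tens[OF msW]
        using RR by (simp add: cmmul_msc_left cmmul_msc_right cmmul_cid_left R_def sconj_cid[OF msW mat_on_mapn])
      define H where "H = msc (complex_of_real (\<eta> / a)) X"
      define q where "q = \<eta> * K / a"
      have mH: "mat_on n H" using mX by (simp add: H_def)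
      have hH: "herm n H" unfolding H_def by (rule herm_msc[OF hX])
      have bH: "bnd n H q" unfolding bnd_def
      proof (intro conjI allI)
        show "0 \<le> q" using eta0 K0 a0 eps by (simp add: q_def)
        show "q < 1" using etaK a0 eps by (simp add: q_def field_simps)
        fix v
        have "nsq n (mv n H v) = (\<eta> / a)\<^sup>2 * nsq n (mv n X v)"
          using a0 eta0 eps by (simp add: H_def nsq_mv_msc norm_divide)
        also have "\<dots> \<le> (\<eta> / a)\<^sup>2 * (fro n X * nsq n v)" by (intro mult_left_mono nsq_mv_le) simp
        also have "\<dots> = q\<^sup>2 * nsq n v" by (simp add: q_def K_def power_divide power_mult_distrib fro_nonneg)
        finally show "nsq n (mv n H v) \<le> q\<^sup>2 * nsq n v" .
      qed
      have MP: "tens smulW n (msc (complex_of_real a) (fser n 1 H)) e \<in> P n"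
        using a0 eps by (intro tens_pos_in_P[OF assms(2) n mH hH bH]) simp
      have sumP: "madd (madd (tens smulW n (msc (complex_of_real (1 + \<eta>)) (Y t)) e) (mneg (mneg (mapn n \<phi> A))))
           (tens smulW n (msc (complex_of_real a) (fser n 1 H)) e) \<in> P n"
        using f(3)[OF n RE[unfolded RE_eq] MP] .
      have final: "madd (madd (tens smulW n (msc (complex_of_real (1 + \<eta>)) (Y t)) e) (mneg (mneg (mapn n \<phi> A))))
           (tens smulW n (msc (complex_of_real a) (fser n 1 H)) e)
         = madd (idt n (smulW (complex_of_real \<epsilon>) e)) B"
      proof (intro ext)
        fix i j
        show "madd (madd (tens smulW n (msc (complex_of_real (1 + \<eta>)) (Y t)) e) (mneg (mneg (mapn n \<phi> A))))
           (tens smulW n (msc (complex_of_real a) (fser n 1 H)) e) i j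
         = madd (idt n (smulW (complex_of_real \<epsilon>) e)) B i j"
        proof (cases "i < n \<and> j < n")
          case False
          thus ?thesis by (auto simp: madd_def mneg_def tens_def mapn_def idt_def B_def unital_ext_n_def)
        next
          case True
          hence i: "i < n" and j: "j < n" by auto
          define c where "c = cid n i j"
          define x where "x = X i j"
          have a_ne: "complex_of_real a \<noteq> 0" using a0 eps by simp
          have coef: "complex_of_real (1 + \<eta>) * (x + complex_of_real t * c)
              + complex_of_real a * (c - complex_of_real (\<eta> / a) * x) = complex_of_real \<epsilon> * c + x"
          proof -
            have "complex_of_real a * (complex_of_real (\<eta> / a) * x) = complex_of_real \<eta> * x"
              using a_ne by (simp add: field_simps)
            hence "complex_of_real (1 + \<eta>) * (x + complex_of_real t * c)
              + complex_of_real a * (c - complex_of_real (\<eta> / a) * x)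
              = x + complex_of_real ((1 + \<eta>) * t + a) * c" by (simp add: algebra_simps)
            also have "(1 + \<eta>) * t + a = \<epsilon>" by (simp add: a_def)
            finally show ?thesis by simp
          qed
          have lhs: "madd (madd (tens smulW n (msc (complex_of_real (1 + \<eta>)) (Y t)) e) (mneg (mneg (mapn n \<phi> A))))
              (tens smulW n (msc (complex_of_real a) (fser n 1 H)) e) i j
            = smulW (complex_of_real (1 + \<eta>) * (x + complex_of_real t * c)) e + \<phi> (A i j)
              + smulW (complex_of_real a * (c - complex_of_real (\<eta> / a) * x)) e"
            unfolding fser_1[OF mH]
            using i j by (simp add: madd_def mneg_def tens_def mapn_def msc_def Y_def H_def c_def x_def)
          have rhs: "madd (idt n (smulW (complex_of_real \<epsilon>) e)) B i j
            = smulW (complex_of_real \<epsilon> * c) e + (\<phi> (A i j) + smulW x e)"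
            using i j by (simp add: madd_def idt_def B_def unital_ext_n_def c_def x_def cid_in
                module.scale_zero_left[OF msW] module.scale_one[OF msW])
          have "smulW (complex_of_real (1 + \<eta>) * (x + complex_of_real t * c)) e
              + smulW (complex_of_real a * (c - complex_of_real (\<eta> / a) * x)) e
              = smulW (complex_of_real \<epsilon> * c) e + smulW x e"
            by (simp only: module.scale_left_distrib[OF msW, symmetric] coef)
          thus ?thesis unfolding lhs rhs by (simp add: algebra_simps)
        qed
      qed
      show "madd (idt n (smulW (complex_of_real \<epsilon>) e)) B \<in> P n" using sumP final by simp
    qed
    thus "unital_ext_n (+) smulW \<phi> e n AX \<in> P n" by (simp add: AXe B_def)
  qed
qed


end
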